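(* Let $B=B_G(\{p_i\},\chi)$. Then: (1) the only grouplike elements of $B$ are the $x^a$, $a\in G$; (2) for $a\in G$, every $(1,x^a)$-skew primitive element of $B$ lies in $k(1-x^a)+kM$; (3) every skew primitive element of $B$ not lying in $kG$ is of the form $by_i+c(1-x_i)$ for some $i\in I$, or $by+c(1-x)$, for some scalars $b,c\in k$.
   Context: $k$ is algebraically closed of characteristic zero. Data: $G$ a subgroup of $(\mathbb{Q},+)$ containing $\mathbb{Z}$, written $\{x^a:a\in G\}$ with $x^ax^{a'}=x^{a+a'}$; index set $I$ with $|I|\ge2$; pairwise relatively prime integers $p_i\ge2$ with $1/p_i\in G$; $M$ the additive submonoid of $\mathbb{Q}$ generated by $\{1/p_i\}$; $GM=\sum_iG(1/p_i)$; $\chi:GM\to k^\times$ a homomorphism with $\chi(1/p_i^2)$ a primitive $p_i$-th root of unity. $B_G(\{p_i\},\chi)$ is generated by $x^a$ ($a\in G$), $y_i$ ($i\in I$) with relations $x^0=1$, $x^ax^{a'}=x^{a+a'}$, $x^ay_i=\chi(a/p_i)y_ix^a$, $y_iy_j=y_jy_i$, $y_i^{p_i}=y_j^{p_j}$, with $x^a$ grouplike and $\Delta(y_i)=y_i\otimes1+x_i\otimes y_i$ where $x_i:=x^{1/p_i}$. For $b\in M$ write $y^b$ for the monomial $\prod y_i^{n_i}$ where $b=\sum n_i/p_i$ (well defined), and $kM$ for the subalgebra spanned by the $y^b$; $y:=y^1=y_i^{p_i}$, $x:=x^1$. A $(1,g)$-skew primitive element $z$ satisfies $\Delta(z)=z\otimes1+g\otimes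 z$ with $g$ grouplike; $kG$ denotes the span of the $x^a$. *)

theory Defs
  imports "HOL-Computational_Algebra.Polynomial"
begin

text \<open>The Hopf algebra B_G({p_i},chi) is modelled concretely on its standard basis
  y^b x^a (b in M, a in G): an element is a finitely supported function
  (b,a) |-> coefficient of y^b x^a.  The tensor square B (x) B is modelled on the
  product basis (y^b x^a) (x) (y^b' x^a').\<close>

definition Mset :: "'i set \<Rightarrow> ('i \<Rightarrow> nat) \<Rightarrow> rat set" where
  "Mset I p = {(\<Sum>i\<in>S. of_nat (n i) / of_nat (p i)) | S n. finite S \<and> S \<subseteq> I}"

definition GMset :: "rat set \<Rightarrow> 'i set \<Rightarrow> ('i \<Rightarrow> nat) \<Rightarrow> rat set" where
  "GMset G I p = {(\<Sum>i\<in>S. g i / of_nat (p i)) | S g. finite S \<and> S \<subseteq> I \<and> (\<forall>i\<in>S. g i \<in> G)}"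

definition Bcar :: "rat set \<Rightarrow> 'i set \<Rightarrow> ('i \<Rightarrow> nat) \<Rightarrow> (rat \<times> rat \<Rightarrow> 'k::field) set" where
  "Bcar G I p = {f. finite {m. f m \<noteq> 0} \<and>
      (\<forall>m. f m \<noteq> 0 \<longrightarrow> fst m \<in> Mset I p \<and> snd m \<in> G)}"

definition Tcar :: "rat set \<Rightarrow> 'i set \<Rightarrow> ('i \<Rightarrow> nat) \<Rightarrow>
    ((rat \<times> rat) \<times> (rat \<times> rat) \<Rightarrow> 'k::field) set" where
  "Tcar G I p = {F. finite {m. F m \<noteq> 0} \<and>
      (\<forall>m. F m \<noteq> 0 \<longrightarrow> fst (fst m) \<in> Mset I p \<and> snd (fst m) \<in> G
                       \<and> fst (snd m) \<in> Mset I p \<and> snd (snd m) \<in> G)}"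

text \<open>Multiplication: (y^b1 x^a1)(y^b2 x^a2) = chi(a1*b2) y^(b1+b2) x^(a1+a2).\<close>
definition Bmul :: "(rat \<Rightarrow> 'k::field) \<Rightarrow> (rat \<times> rat \<Rightarrow> 'k) \<Rightarrow> (rat \<times> rat \<Rightarrow> 'k) \<Rightarrow> rat \<times> rat \<Rightarrow> 'k" where
  "Bmul \<chi> f g m = (\<Sum>uv\<in>{(u, v). f u \<noteq> 0 \<and> g v \<noteq> 0 \<and>
        fst u + fst v = fst m \<and> snd u + snd v = snd m}.
      f (fst uv) * g (snd uv) * \<chi> (snd (fst uv) * fst (snd uv)))"

definition Tmul :: "(rat \<Rightarrow> 'k::field) \<Rightarrow> ((rat \<times> rat) \<times> (rat \<times> rat) \<Rightarrow> 'k)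
     \<Rightarrow> ((rat \<times> rat) \<times> (rat \<times> rat) \<Rightarrow> 'k) \<Rightarrow> (rat \<times> rat) \<times> (rat \<times> rat) \<Rightarrow> 'k" where
  "Tmul \<chi> F H m = (\<Sum>UV\<in>{(U, V). F U \<noteq> 0 \<and> H V \<noteq> 0 \<and>
        fst (fst U) + fst (fst V) = fst (fst m) \<and> snd (fst U) + snd (fst V) = snd (fst m) \<and>
        fst (snd U) + fst (snd V) = fst (snd m) \<and> snd (snd U) + snd (snd V) = snd (snd m)}.
      F (fst UV) * H (snd UV) * \<chi> (snd (fst (fst UV)) * fst (fst (snd UV)))
        * \<chi> (snd (snd (fst UV)) * fst (snd (snd UV))))"

definition Bbas :: "rat \<Rightarrow> rat \<Rightarrow> rat \<times> rat \<Rightarrow> 'k::field" where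
  "Bbas b a = (\<lambda>m. if m = (b, a) then 1 else 0)"

definition Xel :: "rat \<Rightarrow> rat \<times> rat \<Rightarrow> 'k::field" where "Xel a = Bbas 0 a"
definition Yel :: "('i \<Rightarrow> nat) \<Rightarrow> 'i \<Rightarrow> rat \<times> rat \<Rightarrow> 'k::field" where
  "Yel p i = Bbas (1 / of_nat (p i)) 0"

definition tens :: "(rat \<times> rat \<Rightarrow> 'k::field) \<Rightarrow> (rat \<times> rat \<Rightarrow> 'k) \<Rightarrow> (rat \<times> rat) \<times> (rat \<times> rat) \<Rightarrow> 'k" where
  "tens f g = (\<lambda>m. f (fst m) * g (snd m))"

definition addB :: "('a \<Rightarrow> 'k::field) \<Rightarrow> ('a \<Rightarrow> 'k) \<Rightarrow> 'a \<Rightarrow> 'k" where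
  "addB f g = (\<lambda>m. f m + g m)"
definition smulB :: "'k::field \<Rightarrow> ('a \<Rightarrow> 'k) \<Rightarrow> 'a \<Rightarrow> 'k" where
  "smulB c f = (\<lambda>m. c * f m)"

text \<open>The comultiplication: the unique algebra map B \<rightarrow> B (x) B with
  Delta(x^a) = x^a (x) x^a and Delta(y_i) = y_i (x) 1 + x_i (x) y_i
  (extended by 0 outside the carrier, to make it unique as a HOL function).\<close>
definition Delta :: "rat set \<Rightarrow> 'i set \<Rightarrow> ('i \<Rightarrow> nat) \<Rightarrow> (rat \<Rightarrow> 'k::field)
    \<Rightarrow> (rat \<times> rat \<Rightarrow> 'k) \<Rightarrow> (rat \<times> rat) \<times> (rat \<times> rat) \<Rightarrow> 'k" where
  "Delta G I p \<chi> = (THE D.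
      (\<forall>f. f \<notin> Bcar G I p \<longrightarrow> D f = (\<lambda>_. 0)) \<and>
      (\<forall>f\<in>Bcar G I p. \<forall>g\<in>Bcar G I p. D (addB f g) = addB (D f) (D g)) \<and>
      (\<forall>c. \<forall>f\<in>Bcar G I p. D (smulB c f) = smulB c (D f)) \<and>
      (\<forall>f\<in>Bcar G I p. \<forall>g\<in>Bcar G I p. D (Bmul \<chi> f g) = Tmul \<chi> (D f) (D g)) \<and>
      (\<forall>a\<in>G. D (Xel a) = tens (Xel a) (Xel a)) \<and>
      (\<forall>i\<in>I. D (Yel p i) = addB (tens (Yel p i) (Xel 0))
                                 (tens (Xel (1 / of_nat (p i))) (Yel p i))))"

definition grouplike where
  "grouplike G I p \<chi> g \<longleftrightarrow> g \<in> Bcar G I p \<and> g \<noteq> (\<lambda>_. 0) \<and> Delta G I p \<chi> g = tens g g"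

definition skew_prim where
  "skew_prim G I p \<chi> g z \<longleftrightarrow> z \<in> Bcar G I p \<and> grouplike G I p \<chi> g \<and>
     Delta G I p \<chi> z = addB (tens z (Xel 0)) (tens g z)"

definition kG where "kG G I p = {f \<in> Bcar G I p. \<forall>m. f m \<noteq> 0 \<longrightarrow> fst m = 0}"
definition kM where "kM G I p = {f \<in> Bcar G I p. \<forall>m. f m \<noteq> 0 \<longrightarrow> snd m = 0}"

end

theory Submission
  imports Defs "HOL-Library.Product_Plus"
begin

definition spt :: "('a \<Rightarrow> 'k::zero) \<Rightarrow> 'a set" where "spt f = {m. f m \<noteq> 0}"

definition cv :: "('a::ab_group_add \<Rightarrow> 'a \<Rightarrow> 'k::field) \<Rightarrow> ('a \<Rightarrow> 'k) \<Rightarrow> ('a \<Rightarrow> 'k) \<Rightarrow> 'a \<Rightarrow> 'k" where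
 "cv \<tau> f g m = (\<Sum>uv\<in>{(u,v). f u \<noteq> 0 \<and> g v \<noteq> 0 \<and> u + v = m}. f (fst uv) * g (snd uv) * \<tau> (fst uv) (snd uv))"

lemma cv_sup:
  assumes "finite X" "finite Y" "spt f \<subseteq> X" "spt g \<subseteq> Y"
  shows "cv \<tau> f g m = (\<Sum>x\<in>X. \<Sum>y\<in>Y. if x + y = m then f x * g y * \<tau> x y else 0)"
proof -
  have sub: "{(u,v). f u \<noteq> 0 \<and> g v \<noteq> 0 \<and> u + v = m} \<subseteq> X \<times> Y" using assms(3,4) by (auto simp: spt_def)
  have "cv \<tau> f g m = (\<Sum>uv\<in>X \<times> Y. if fst uv + snd uv = m then f (fst uv) * g (snd uv) * \<tau> (fst uv) (snd uv) else 0)"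
    unfolding cv_def
    apply (rule sum.mono_neutral_cong_left)
    using sub assms(1,2) by auto
  also have "\<dots> = (\<Sum>x\<in>X. \<Sum>y\<in>Y. if x + y = m then f x * g y * \<tau> x y else 0)"
    by (simp add: sum.cartesian_product split_beta)
  finally show ?thesis .
qed

lemma cv_left:
  assumes "finite X" "spt f \<subseteq> X" "finite (spt g)"
  shows "cv \<tau> f g m = (\<Sum>x\<in>X. f x * g (m - x) * \<tau> x (m - x))"
proof -
  have "cv \<tau> f g m = (\<Sum>x\<in>X. \<Sum>y\<in>spt g. if x + y = m then f x * g y * \<tau> x y else 0)"
    using cv_sup[OF assms(1,3,2)] by simp
  also have "\<dots> = (\<Sum>x\<in>X. f x * g (m - x) * \<tau> x (m - x))"
  proof (rule sum.cong[OF refl])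
    fix x
    have "(\<Sum>y\<in>spt g. if x + y = m then f x * g y * \<tau> x y else 0)
        = (\<Sum>y\<in>spt g. if y = m - x then f x * g y * \<tau> x y else 0)"
      by (rule sum.cong) (auto simp: algebra_simps)
    also have "\<dots> = f x * g (m - x) * \<tau> x (m - x)"
      by (subst sum.delta[OF assms(3)]) (auto simp: spt_def)
    finally show "(\<Sum>y\<in>spt g. if x + y = m then f x * g y * \<tau> x y else 0) = f x * g (m - x) * \<tau> x (m - x)" .
  qed
  finally show ?thesis .
qed

lemma cv_right:
  assumes "finite Y" "spt g \<subseteq> Y" "finite (spt f)"
  shows "cv \<tau> f g m = (\<Sum>y\<in>Y. f (m - y) * g y * \<tau> (m - y) y)"
proof -
  have "cv \<tau> f g m = (\<Sum>x\<in>spt f. \<Sum>y\<in>Y. if x + y = m then f x * g y * \<tau> x y else 0)"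
    using cv_sup[OF assms(3,1) _ assms(2)] by simp
  also have "\<dots> = (\<Sum>y\<in>Y. \<Sum>x\<in>spt f. if x + y = m then f x * g y * \<tau> x y else 0)"
    by (rule sum.swap)
  also have "\<dots> = (\<Sum>y\<in>Y. f (m - y) * g y * \<tau> (m - y) y)"
  proof (rule sum.cong[OF refl])
    fix y
    have "(\<Sum>x\<in>spt f. if x + y = m then f x * g y * \<tau> x y else 0)
        = (\<Sum>x\<in>spt f. if x = m - y then f x * g y * \<tau> x y else 0)"
      by (rule sum.cong) (auto simp: algebra_simps)
    also have "\<dots> = f (m - y) * g y * \<tau> (m - y) y"
      by (subst sum.delta[OF assms(3)]) (auto simp: spt_def)
    finally show "(\<Sum>x\<in>spt f. if x + y = m then f x * g y * \<tau> x y else 0) = f (m - y) * g y * \<tau> (m - y) y" .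
  qed
  finally show ?thesis .
qed

lemma cv_spt: "spt (cv \<tau> f g) \<subseteq> (\<lambda>(u,v). u + v) ` (spt f \<times> spt g)"
proof
  fix m assume "m \<in> spt (cv \<tau> f g)"
  then have ne: "cv \<tau> f g m \<noteq> 0" by (simp add: spt_def)
  have "{(u,v). f u \<noteq> 0 \<and> g v \<noteq> 0 \<and> u + v = m} \<noteq> {}"
  proof
    assume e: "{(u,v). f u \<noteq> 0 \<and> g v \<noteq> 0 \<and> u + v = m} = {}"
    have "cv \<tau> f g m = 0" unfolding cv_def by (subst e) simp
    with ne show False by simp
  qed
  then obtain u v where "f u \<noteq> 0" "g v \<noteq> 0" "u + v = m" by auto
  then show "m \<in> (\<lambda>(u,v). u + v) ` (spt f \<times> spt g)" by (force simp: spt_def)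
qed

lemma cv_fin: "finite (spt f) \<Longrightarrow> finite (spt g) \<Longrightarrow> finite (spt (cv \<tau> f g))"
  by (rule finite_subset[OF cv_spt]) auto

lemma cv_cong:
  assumes "\<And>u v. u \<in> spt f \<Longrightarrow> v \<in> spt g \<Longrightarrow> \<tau> u v = \<tau>' u v"
  shows "cv \<tau> f g = cv \<tau>' f g"
  unfolding cv_def using assms by (intro ext sum.cong) (auto simp: spt_def)

lemma cv_scale:
  assumes "\<And>u v. u \<in> spt f \<Longrightarrow> v \<in> spt g \<Longrightarrow> \<tau>' u v = K * \<tau> u v"
  shows "cv \<tau>' f g m = K * cv \<tau> f g m"
  unfolding cv_def using assms by (auto simp: sum_distrib_left spt_def intro!: sum.cong)

lemma cv_delta:
  "cv \<tau> (Bbas (fst u) (snd u)) (Bbas (fst v) (snd v)) m = (if m = u + v then \<tau> u v else 0)"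
proof -
  have "spt (Bbas (fst u) (snd u) :: _ \<Rightarrow> 'k::field) = {u}" "spt (Bbas (fst v) (snd v) :: _ \<Rightarrow> 'k) = {v}"
    by (auto simp: spt_def Bbas_def)
  then show ?thesis
    by (subst cv_sup[where X="{u}" and Y="{v}"]) (auto simp: Bbas_def)
qed

lemma Bmul_cv: "Bmul \<chi> = cv (\<lambda>u v. \<chi> (snd u * fst v))"
  unfolding Bmul_def cv_def by (intro ext) (simp add: prod_eq_iff)

lemma Tmul_cv: "Tmul \<chi> = cv (\<lambda>U V. \<chi> (snd (fst U) * fst (fst V)) * \<chi> (snd (snd U) * fst (snd V)))"
  unfolding Tmul_def cv_def by (intro ext) (simp add: prod_eq_iff mult.assoc)


lemma cv_assoc:
  assumes ff: "finite (spt f)" and fg: "finite (spt g)" and fh: "finite (spt h)"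
    and coc: "\<And>u v w. u \<in> spt f \<Longrightarrow> v \<in> spt g \<Longrightarrow> w \<in> spt h \<Longrightarrow>
                 \<tau> u v * \<tau> (u + v) w = \<tau> v w * \<tau> u (v + w)"
  shows "cv \<tau> (cv \<tau> f g) h = cv \<tau> f (cv \<tau> g h)"
proof
  fix m
  have "cv \<tau> (cv \<tau> f g) h m = (\<Sum>w\<in>spt h. cv \<tau> f g (m - w) * h w * \<tau> (m - w) w)"
    by (rule cv_right[OF fh order_refl cv_fin[OF ff fg]])
  also have "\<dots> = (\<Sum>w\<in>spt h. \<Sum>u\<in>spt f. f u * g (m - w - u) * h w * (\<tau> u (m - w - u) * \<tau> (m - w) w))"
    by (rule sum.cong[OF refl], subst cv_left[OF ff order_refl fg]) (simp add: sum_distrib_right mult.assoc mult.left_commute)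
  also have "\<dots> = (\<Sum>u\<in>spt f. \<Sum>w\<in>spt h. f u * g (m - w - u) * h w * (\<tau> u (m - w - u) * \<tau> (m - w) w))"
    by (rule sum.swap)
  also have "\<dots> = (\<Sum>u\<in>spt f. \<Sum>w\<in>spt h. f u * g (m - u - w) * h w * (\<tau> (m - u - w) w * \<tau> u (m - u)))"
  proof (intro sum.cong refl)
    fix u w assume u: "u \<in> spt f" and w: "w \<in> spt h"
    have e1: "m - w - u = m - u - w" by (simp add: algebra_simps)
    show "f u * g (m - w - u) * h w * (\<tau> u (m - w - u) * \<tau> (m - w) w) =
          f u * g (m - u - w) * h w * (\<tau> (m - u - w) w * \<tau> u (m - u))"
    proof (cases "g (m - u - w) = 0")
      case True then show ?thesis by (simp add: e1)
    next
      case False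
      then have v: "m - u - w \<in> spt g" by (simp add: spt_def)
      have "\<tau> u (m - u - w) * \<tau> (u + (m - u - w)) w = \<tau> (m - u - w) w * \<tau> u ((m - u - w) + w)"
        by (rule coc[OF u v w])
      moreover have "u + (m - u - w) = m - w" "(m - u - w) + w = m - u" by (simp_all add: algebra_simps)
      ultimately show ?thesis by (simp add: e1)
    qed
  qed
  also have "\<dots> = (\<Sum>u\<in>spt f. f u * cv \<tau> g h (m - u) * \<tau> u (m - u))"
    by (rule sum.cong[OF refl], subst cv_right[OF fh order_refl fg]) (simp add: sum_distrib_right sum_distrib_left mult.assoc mult.left_commute)
  also have "\<dots> = cv \<tau> f (cv \<tau> g h) m"
    by (rule cv_left[OF ff order_refl cv_fin[OF fg fh], symmetric])
  finally show "cv \<tau> (cv \<tau> f g) h m = cv \<tau> f (cv \<tau> g h) m" .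
qed

lemma cv_sum:
  assumes A: "finite A" and B: "finite B"
    and FA: "\<And>u. u \<in> A \<Longrightarrow> finite (spt (F u))" and HB: "\<And>v. v \<in> B \<Longrightarrow> finite (spt (H v))"
  shows "cv \<tau> (\<lambda>x. \<Sum>u\<in>A. F u x) (\<lambda>y. \<Sum>v\<in>B. H v y) m = (\<Sum>u\<in>A. \<Sum>v\<in>B. cv \<tau> (F u) (H v) m)"
proof -
  define X where "X = (\<Union>u\<in>A. spt (F u))"
  define Y where "Y = (\<Union>v\<in>B. spt (H v))"
  have fX: "finite X" using A FA by (simp add: X_def)
  have fY: "finite Y" using B HB by (simp add: Y_def)
  have sX: "spt (\<lambda>x. \<Sum>u\<in>A. F u x) \<subseteq> X"
    unfolding X_def spt_def by (auto intro: ccontr simp: sum.neutral)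
  have sY: "spt (\<lambda>y. \<Sum>v\<in>B. H v y) \<subseteq> Y"
    unfolding Y_def spt_def by (auto intro: ccontr simp: sum.neutral)
  have "cv \<tau> (\<lambda>x. \<Sum>u\<in>A. F u x) (\<lambda>y. \<Sum>v\<in>B. H v y) m =
     (\<Sum>x\<in>X. \<Sum>y\<in>Y. if x + y = m then (\<Sum>u\<in>A. F u x) * (\<Sum>v\<in>B. H v y) * \<tau> x y else 0)"
    by (rule cv_sup[OF fX fY sX sY])
  also have "\<dots> = (\<Sum>x\<in>X. \<Sum>y\<in>Y. \<Sum>u\<in>A. \<Sum>v\<in>B. if x + y = m then F u x * H v y * \<tau> x y else 0)"
    by (intro sum.cong refl) (auto simp: sum_distrib_left sum_distrib_right mult.assoc intro: sum.swap)
  also have "\<dots> = (\<Sum>u\<in>A. \<Sum>v\<in>B. \<Sum>x\<in>X. \<Sum>y\<in>Y. if x + y = m then F u x * H v y * \<tau> x y else 0)"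
    (is "_ = ?R")
  proof -
    let ?t = "\<lambda>u v x y. if x + y = m then F u x * H v y * \<tau> x y else 0"
    have "(\<Sum>x\<in>X. \<Sum>y\<in>Y. \<Sum>u\<in>A. \<Sum>v\<in>B. ?t u v x y) = (\<Sum>x\<in>X. \<Sum>u\<in>A. \<Sum>y\<in>Y. \<Sum>v\<in>B. ?t u v x y)"
      by (intro sum.cong refl, rule sum.swap)
    also have "\<dots> = (\<Sum>u\<in>A. \<Sum>x\<in>X. \<Sum>y\<in>Y. \<Sum>v\<in>B. ?t u v x y)"
      by (rule sum.swap)
    also have "\<dots> = (\<Sum>u\<in>A. \<Sum>x\<in>X. \<Sum>v\<in>B. \<Sum>y\<in>Y. ?t u v x y)"
      by (intro sum.cong refl, rule sum.swap)
    also have "\<dots> = (\<Sum>u\<in>A. \<Sum>v\<in>B. \<Sum>x\<in>X. \<Sum>y\<in>Y. ?t u v x y)"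
      by (intro sum.cong refl, rule sum.swap)
    finally show ?thesis .
  qed
  also have "\<dots> = (\<Sum>u\<in>A. \<Sum>v\<in>B. cv \<tau> (F u) (H v) m)"
    apply (intro sum.cong refl)
    apply (rule cv_sup[symmetric, OF fX fY])
    unfolding X_def Y_def by auto
  finally show ?thesis .
qed



locale BG =
  fixes G :: "rat set" and I :: "'i set" and p :: "'i \<Rightarrow> nat" and \<chi> :: "rat \<Rightarrow> 'k::field_char_0"
  assumes G_add: "\<forall>a\<in>G. \<forall>b\<in>G. a + b \<in> G" and G_neg: "\<forall>a\<in>G. - a \<in> G"
    and G_Z: "(\<int> :: rat set) \<subseteq> G"
    and p2: "\<forall>i\<in>I. p i \<ge> 2"
    and pcop: "\<forall>i\<in>I. \<forall>j\<in>I. i \<noteq> j \<longrightarrow> coprime (p i) (p j)"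
    and pG: "\<forall>i\<in>I. 1 / of_nat (p i) \<in> G"
    and chi_hom: "\<forall>u\<in>GMset G I p. \<forall>v\<in>GMset G I p. \<chi> (u + v) = \<chi> u * \<chi> v"
    and chi_unit: "\<forall>u\<in>GMset G I p. \<chi> u \<noteq> 0"
    and chi_prim: "\<forall>i\<in>I. \<chi> (1 / of_nat (p i) ^ 2) ^ p i = 1 \<and>
                      (\<forall>n. 0 < n \<and> n < p i \<longrightarrow> \<chi> (1 / of_nat (p i) ^ 2) ^ n \<noteq> 1)"
begin

definition pa :: "'i \<Rightarrow> rat" where "pa i = 1 / of_nat (p i)"
definition ls :: "'i list \<Rightarrow> rat" where "ls l = sum_list (map pa l)"
definition Ml :: "rat set" where "Ml = {ls l | l. set l \<subseteq> I}"
definition q :: "'i \<Rightarrow> 'k" where "q i = \<chi> (pa i * pa i)"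

lemma G0: "0 \<in> G" using G_Z by auto
lemma G1: "1 \<in> G" using G_Z by auto
lemma Gadd: "x \<in> G \<Longrightarrow> y \<in> G \<Longrightarrow> x + y \<in> G" using G_add by auto

lemma pa_pos: "i \<in> I \<Longrightarrow> pa i > 0" using p2 by (auto simp: pa_def)
lemma pa_G: "i \<in> I \<Longrightarrow> pa i \<in> G" using pG by (auto simp: pa_def)
lemma pa_mult: "i \<in> I \<Longrightarrow> of_nat (p i) * pa i = 1" using p2 by (force simp: pa_def)

lemma ls_Nil[simp]: "ls [] = 0" and ls_Cons[simp]: "ls (i # l) = pa i + ls l"
  and ls_append[simp]: "ls (l1 @ l2) = ls l1 + ls l2"
  and ls_replicate[simp]: "ls (replicate n i) = of_nat n * pa i"
  by (simp_all add: ls_def sum_list_replicate)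

lemma ls_nonneg: "set l \<subseteq> I \<Longrightarrow> ls l \<ge> 0"
  by (induction l) (auto dest: pa_pos intro: add_nonneg_nonneg less_imp_le)

lemma ls_zero: "set l \<subseteq> I \<Longrightarrow> ls l = 0 \<longleftrightarrow> l = []"
proof (induction l)
  case (Cons i l)
  then have "pa i > 0" "ls l \<ge> 0" using pa_pos ls_nonneg by auto
  then show ?case by simp
qed simp

lemma ls_G: "set l \<subseteq> I \<Longrightarrow> ls l \<in> G"
  by (induction l) (auto simp: G0 pa_G Gadd)

lemma Ml_nonneg: "e \<in> Ml \<Longrightarrow> e \<ge> 0" using ls_nonneg by (auto simp: Ml_def)
lemma Ml_G: "e \<in> Ml \<Longrightarrow> e \<in> G" using ls_G by (auto simp: Ml_def)
lemma Ml_0: "0 \<in> Ml" unfolding Ml_def by (rule CollectI, rule exI[of _ "[]"]) simp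
lemma Ml_ls: "set l \<subseteq> I \<Longrightarrow> ls l \<in> Ml" unfolding Ml_def by blast
lemma Ml_pa: "i \<in> I \<Longrightarrow> pa i \<in> Ml" using Ml_ls[of "[i]"] by simp
lemma Ml_add: "e \<in> Ml \<Longrightarrow> f \<in> Ml \<Longrightarrow> e + f \<in> Ml"
proof -
  assume "e \<in> Ml" "f \<in> Ml"
  then obtain l1 l2 where "set l1 \<subseteq> I" "set l2 \<subseteq> I" "e = ls l1" "f = ls l2" by (auto simp: Ml_def)
  then show ?thesis using Ml_ls[of "l1 @ l2"] by simp
qed

lemma ls_mset: "mset l = mset l' \<Longrightarrow> ls l = ls l'"
proof -
  assume "mset l = mset l'"
  then have "mset (map pa l) = mset (map pa l')" by simp
  then have "sum_mset (mset (map pa l)) = sum_mset (mset (map pa l'))" by simp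
  then show ?thesis unfolding ls_def by (metis sum_mset_sum_list)
qed

lemma rep_sub: "i \<in> I \<Longrightarrow> set (replicate n i) \<subseteq> I" by auto

lemma ls_remove1: "i \<in> set l \<Longrightarrow> ls l = pa i + ls (remove1 i l)"
  unfolding ls_def by (rule sum_list_map_remove1)

lemma ls_concat: "ls (concat L) = sum_list (map ls L)"
  by (induction L) auto

lemma ls_count: "set l \<subseteq> X \<Longrightarrow> finite X \<Longrightarrow> ls l = (\<Sum>j\<in>X. of_nat (count_list l j) * pa j)"
proof (induction l)
  case Nil then show ?case by simp
next
  case (Cons i l)
  then have "ls (i # l) = pa i + (\<Sum>j\<in>X. of_nat (count_list l j) * pa j)" by simp
  also have "pa i = (\<Sum>j\<in>X. if i = j then pa j else 0)" using Cons.prems by (simp add: sum.delta)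
  finally show ?case by (auto simp: sum.distrib[symmetric] distrib_right intro!: sum.cong)
qed

lemma Mset_eq: "Mset I p = Ml"
proof
  show "Mset I p \<subseteq> Ml"
  proof
    fix x assume "x \<in> Mset I p"
    then obtain S n where S: "finite S" "S \<subseteq> I" and x: "x = (\<Sum>i\<in>S. of_nat (n i) / of_nat (p i))"
      by (auto simp: Mset_def)
    obtain l0 where l0: "set l0 = S" "distinct l0" using finite_distinct_list[OF S(1)] by blast
    define l where "l = concat (map (\<lambda>i. replicate (n i) i) l0)"
    have "ls l = sum_list (map (\<lambda>i. of_nat (n i) * pa i) l0)"
      unfolding l_def ls_concat by (simp add: comp_def)
    also have "\<dots> = (\<Sum>i\<in>S. of_nat (n i) * pa i)"
      using l0 by (simp add: sum_list_distinct_conv_sum_set)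
    also have "\<dots> = x" unfolding x by (simp add: pa_def)
    finally have "ls l = x" .
    moreover have "set l \<subseteq> I" using l0 S by (auto simp: l_def)
    ultimately show "x \<in> Ml" by (auto simp: Ml_def)
  qed
next
  show "Ml \<subseteq> Mset I p"
  proof
    fix x assume "x \<in> Ml"
    then obtain l where l: "set l \<subseteq> I" "x = ls l" by (auto simp: Ml_def)
    have "ls l = (\<Sum>i\<in>set l. of_nat (count_list l i) * pa i)"
      by (rule ls_count) auto
    then have "x = (\<Sum>i\<in>set l. of_nat (count_list l i) / of_nat (p i))"
      using l by (simp add: pa_def)
    then show "x \<in> Mset I p" unfolding Mset_def using l by blast
  qed
qed

lemma GM_0: "0 \<in> GMset G I p"
  unfolding GMset_def by (rule CollectI, rule exI[of _ "{}"]) simp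

lemma GM_single: "x \<in> G \<Longrightarrow> i \<in> I \<Longrightarrow> x * pa i \<in> GMset G I p"
  unfolding GMset_def
  by (rule CollectI, rule exI[of _ "{i}"], rule exI[of _ "\<lambda>_. x"]) (simp add: pa_def)

lemma GM_add: "u \<in> GMset G I p \<Longrightarrow> v \<in> GMset G I p \<Longrightarrow> u + v \<in> GMset G I p"
proof -
  assume "u \<in> GMset G I p" "v \<in> GMset G I p"
  then obtain S1 g1 S2 g2 where S: "finite S1" "S1 \<subseteq> I" "\<forall>i\<in>S1. g1 i \<in> G" "u = (\<Sum>i\<in>S1. g1 i / of_nat (p i))"
    "finite S2" "S2 \<subseteq> I" "\<forall>i\<in>S2. g2 i \<in> G" "v = (\<Sum>i\<in>S2. g2 i / of_nat (p i))"
    unfolding GMset_def by blast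
  define g where "g i = (if i \<in> S1 then g1 i else 0) + (if i \<in> S2 then g2 i else 0)" for i
  have "(\<Sum>i\<in>S1 \<union> S2. g i / of_nat (p i)) =
     (\<Sum>i\<in>S1 \<union> S2. (if i \<in> S1 then g1 i / of_nat (p i) else 0)) + (\<Sum>i\<in>S1 \<union> S2. (if i \<in> S2 then g2 i / of_nat (p i) else 0))"
    unfolding sum.distrib[symmetric] by (rule sum.cong) (auto simp: g_def add_divide_distrib)
  also have "\<dots> = u + v"
    using S by (simp add: sum.inter_restrict[symmetric] Int_absorb1 Int_absorb2 Un_Int_eq)
  finally have "u + v = (\<Sum>i\<in>S1 \<union> S2. g i / of_nat (p i))" by simp
  moreover have "\<forall>i\<in>S1 \<union> S2. g i \<in> G" using S by (auto simp: g_def G0 Gadd)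
  ultimately show ?thesis unfolding GMset_def using S by blast
qed

lemma GM_ls: "x \<in> G \<Longrightarrow> set l \<subseteq> I \<Longrightarrow> x * ls l \<in> GMset G I p"
  by (induction l) (auto simp: GM_0 distrib_left intro!: GM_add GM_single)

lemma GM_Ml: "x \<in> G \<Longrightarrow> e \<in> Ml \<Longrightarrow> x * e \<in> GMset G I p"
  using GM_ls by (auto simp: Ml_def)

lemma chi0: "\<chi> 0 = 1"
proof -
  have "\<chi> (0 + 0) = \<chi> 0 * \<chi> 0" using chi_hom GM_0 by blast
  moreover have "\<chi> 0 \<noteq> 0" using chi_unit GM_0 by blast
  ultimately show ?thesis by simp
qed

lemma chi_lin_r: "x \<in> G \<Longrightarrow> e \<in> Ml \<Longrightarrow> f \<in> Ml \<Longrightarrow> \<chi> (x * (e + f)) = \<chi> (x * e) * \<chi> (x * f)"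
  using chi_hom GM_Ml by (simp add: distrib_left)

lemma chi_lin_l: "x \<in> G \<Longrightarrow> y \<in> G \<Longrightarrow> e \<in> Ml \<Longrightarrow> \<chi> ((x + y) * e) = \<chi> (x * e) * \<chi> (y * e)"
  using chi_hom GM_Ml by (simp add: distrib_right)

lemma chi_prod: "x \<in> G \<Longrightarrow> set l \<subseteq> I \<Longrightarrow> \<chi> (x * ls l) = (\<Prod>j\<leftarrow>l. \<chi> (x * pa j))"
proof (induction l)
  case Nil then show ?case by (simp add: chi0)
next
  case (Cons i l)
  then have "\<chi> (x * ls (i # l)) = \<chi> (x * pa i) * \<chi> (x * ls l)"
    using chi_lin_r[of x "pa i" "ls l"] Ml_pa Ml_ls by simp
  with Cons show ?case by simp
qed

lemma q_eq: "i \<in> I \<Longrightarrow> \<chi> (1 / of_nat (p i) ^ 2) = q i"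
  by (simp add: q_def pa_def power2_eq_square)

lemma q_p: "i \<in> I \<Longrightarrow> q i ^ p i = 1" using chi_prim q_eq by auto
lemma q_ne: "i \<in> I \<Longrightarrow> 0 < n \<Longrightarrow> n < p i \<Longrightarrow> q i ^ n \<noteq> 1" using chi_prim q_eq by auto
lemma q_mod: "i \<in> I \<Longrightarrow> q i ^ n = q i ^ (n mod p i)"
proof -
  assume i: "i \<in> I"
  have "q i ^ n = q i ^ (p i * (n div p i) + n mod p i)" by (simp only: mult_div_mod_eq)
  also have "\<dots> = (q i ^ p i) ^ (n div p i) * q i ^ (n mod p i)" by (simp only: power_add power_mult)
  finally show ?thesis using q_p[OF i] by simp
qed

lemma chi_pa: "i \<in> I \<Longrightarrow> \<chi> (pa i) = 1"
proof -
  assume i: "i \<in> I"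
  have "\<chi> (pa i * ls (replicate (p i) i)) = (\<Prod>j\<leftarrow>replicate (p i) i. \<chi> (pa i * pa j))"
    using chi_prod[OF pa_G[OF i] rep_sub[OF i], of "p i"] by (simp add: prod_list_replicate)
  also have "\<dots> = q i ^ p i" by (simp add: q_def prod_list_replicate)
  also have "\<dots> = 1" using q_p[OF i] .
  finally show ?thesis using pa_mult[OF i] by (simp add: mult.commute)
qed

lemma chi_ls: "set l \<subseteq> I \<Longrightarrow> \<chi> (ls l) = 1"
proof (induction l)
  case Nil show ?case by (simp add: chi0)
next
  case (Cons i l)
  have "\<chi> (pa i + ls l) = \<chi> (pa i) * \<chi> (ls l)"
    using chi_hom GM_single[OF G1, of i] GM_ls[OF G1, of l] Cons.prems by simp
  then show ?case using Cons chi_pa by simp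
qed

lemma chi_Ml: "e \<in> Ml \<Longrightarrow> \<chi> e = 1" using chi_ls by (auto simp: Ml_def)

lemma pow_coprime_one:
  fixes z :: "'k"
  assumes "z ^ m = 1" "z ^ n = 1" "coprime m n"
  shows "z = 1"
proof (cases "m = 0")
  case True
  then have "n = 1" using assms(3) by simp
  then show ?thesis using assms(2) by simp
next
  case False
  obtain x y where xy: "m * x = n * y + gcd m n" using bezout_nat[OF False] by blast
  then have "m * x = n * y + 1" using assms(3) by simp
  then have "z ^ (m * x) = z ^ (n * y + 1)" by simp
  then show ?thesis using assms(1,2) by (simp add: power_mult power_add)
qed

lemma chi_cross: "i \<in> I \<Longrightarrow> j \<in> I \<Longrightarrow> i \<noteq> j \<Longrightarrow> \<chi> (pa i * pa j) = 1"
proof -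
  assume i: "i \<in> I" and j: "j \<in> I" and ij: "i \<noteq> j"
  have "\<chi> (pa i * pa j) ^ p j = \<chi> (pa i * ls (replicate (p j) j))"
    using chi_prod[OF pa_G[OF i] rep_sub[OF j], of "p j"] by (simp add: prod_list_replicate)
  also have "\<dots> = \<chi> (pa i)" using pa_mult[OF j] by simp
  finally have 1: "\<chi> (pa i * pa j) ^ p j = 1" using chi_pa[OF i] by simp
  have "\<chi> (pa j * pa i) ^ p i = \<chi> (pa j * ls (replicate (p i) i))"
    using chi_prod[OF pa_G[OF j] rep_sub[OF i], of "p i"] by (simp add: prod_list_replicate)
  also have "\<dots> = \<chi> (pa j)" using pa_mult[OF i] by simp
  finally have 2: "\<chi> (pa i * pa j) ^ p i = 1" using chi_pa[OF j] by (simp add: mult.commute)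
  show ?thesis using pow_coprime_one[OF 2 1] pcop i j ij by blast
qed

lemma chi_pa_ls: "i \<in> I \<Longrightarrow> set l \<subseteq> I \<Longrightarrow> \<chi> (pa i * ls l) = q i ^ count_list l i"
proof (induction l)
  case Nil then show ?case by (simp add: chi0)
next
  case (Cons j l)
  then have "\<chi> (pa i * ls (j # l)) = \<chi> (pa i * pa j) * \<chi> (pa i * ls l)"
    using chi_lin_r[of "pa i" "pa j" "ls l"] Ml_pa Ml_ls pa_G by simp
  with Cons show ?case by (auto simp: q_def chi_cross)
qed

lemma cong_counts:
  assumes l: "set l \<subseteq> I" and l': "set l' \<subseteq> I" and eq: "ls l = ls l'" and i: "i \<in> I"
  shows "int (p i) dvd (int (count_list l i) - int (count_list l' i))"
proof (cases "i \<in> set l \<union> set l'")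
  case False
  then have "count_list l i = 0" "count_list l' i = 0" by (auto simp: count_list_0_iff)
  then show ?thesis by simp
next
  case True
  define S where "S = set l \<union> set l'"
  have fS: "finite S" and SI: "S \<subseteq> I" using l l' by (auto simp: S_def)
  define c where "c j = int (count_list l j) - int (count_list l' j)" for j
  define P where "P j = (\<Prod>k\<in>S - {j}. int (p k))" for j
  have lsS1: "ls l = (\<Sum>j\<in>S. of_nat (count_list l j) * pa j)"
    by (rule ls_count) (auto simp: S_def)
  have lsS2: "ls l' = (\<Sum>j\<in>S. of_nat (count_list l' j) * pa j)"
    by (rule ls_count) (auto simp: S_def)
  note lsS = lsS1 lsS2
  have "(\<Sum>j\<in>S. of_int (c j) * pa j) = ls l - ls l'"
    unfolding lsS c_def by (simp add: sum_subtractf left_diff_distrib)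
  then have z: "(\<Sum>j\<in>S. of_int (c j) * pa j) = 0" using eq by simp
  have Pj: "(\<Prod>k\<in>S. of_nat (p k) :: rat) * pa j = of_int (P j)" if "j \<in> S" for j
  proof -
    have "(\<Prod>k\<in>S. of_nat (p k) :: rat) = of_nat (p j) * (\<Prod>k\<in>S - {j}. of_nat (p k))"
      using that fS by (simp add: prod.remove)
    then show ?thesis using pa_mult[of j] that SI by (auto simp: P_def)
  qed
  have "of_int (\<Sum>j\<in>S. c j * P j) = (\<Prod>k\<in>S. of_nat (p k) :: rat) * (\<Sum>j\<in>S. of_int (c j) * pa j)"
    by (simp add: sum_distrib_left Pj mult.left_commute)
  then have "(of_int (\<Sum>j\<in>S. c j * P j) :: rat) = 0" by (simp only: z mult_zero_right)
  then have sum0: "(\<Sum>j\<in>S. c j * P j) = 0" by (simp only: of_int_eq_0_iff)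
  have iS: "i \<in> S" using True by (simp add: S_def)
  have "c i * P i = - (\<Sum>j\<in>S - {i}. c j * P j)"
    using sum0 fS iS by (simp add: sum.remove eq_neg_iff_add_eq_0)
  moreover have "int (p i) dvd (\<Sum>j\<in>S - {i}. c j * P j)"
    by (rule dvd_sum) (use iS in \<open>auto simp: P_def fS intro!: dvd_mult dvd_prodI\<close>)
  ultimately have "int (p i) dvd c i * P i" by simp
  moreover have "coprime (int (p i)) (P i)"
    unfolding P_def by (rule prod_coprime_right) (use pcop i SI in auto)
  ultimately have "int (p i) dvd c i" by (simp add: coprime_dvd_mult_left_iff)
  then show ?thesis by (simp add: c_def)
qed

lemma pa_diff_notM: "i \<in> I \<Longrightarrow> j \<in> I \<Longrightarrow> i \<noteq> j \<Longrightarrow> pa i - pa j \<notin> Ml"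
proof
  assume i: "i \<in> I" and j: "j \<in> I" and ij: "i \<noteq> j" and "pa i - pa j \<in> Ml"
  then obtain l where l: "set l \<subseteq> I" "pa i - pa j = ls l" by (auto simp: Ml_def)
  have eq: "ls [i] = ls (j # l)" using l by simp
  have d: "int (p i) dvd int (count_list [i] i) - int (count_list (j # l) i)"
    by (rule cong_counts[OF _ _ eq i]) (use i j l in auto)
  show False
  proof (cases "i \<in> set l")
    case True
    have "ls l = pa i + ls (remove1 i l)" by (rule ls_remove1[OF True])
    moreover have "ls (remove1 i l) \<ge> 0" using l by (intro ls_nonneg) (meson order_trans set_remove1_subset)
    ultimately show False using l pa_pos[OF j] by simp
  next
    case False
    then have "count_list (j # l) i = 0" using ij by (simp add: count_list_0_iff)
    then have "int (p i) dvd 1" using d by simp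
    then show False using p2 i by force
  qed
qed

end

primrec gq :: "'k::field \<Rightarrow> nat \<Rightarrow> nat \<Rightarrow> 'k" where
  "gq q 0 k = (if k = 0 then 1 else 0)"
| "gq q (Suc n) k = (if k = 0 then 0 else gq q n (k - 1)) + q ^ k * gq q n k"

lemma gq_above: "n < k \<Longrightarrow> gq q n k = 0"
  by (induction n arbitrary: k) auto

lemma gq_0: "gq q n 0 = 1"
  by (induction n) auto

lemma gq_diag: "gq q n n = 1"
  by (induction n) (auto simp: gq_above)

lemma gq_prod: "k \<le> n \<Longrightarrow> gq q n k * (\<Prod>j\<in>{1..k}. (1 - q ^ j)) = (\<Prod>j\<in>{Suc (n - k)..n}. (1 - q ^ j))"
proof (induction n arbitrary: k)
  case 0 then show ?case by simp
next
  case (Suc n)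
  show ?case
  proof (cases k)
    case 0 then show ?thesis by (simp add: gq_0)
  next
    case (Suc k')
    have k'n: "k' \<le> n" using Suc.prems Suc by simp
    have split1: "(\<Prod>j\<in>{1..Suc k'}. (1 - q ^ j)) = (1 - q ^ Suc k') * (\<Prod>j\<in>{1..k'}. (1 - q ^ j))"
      by (simp add: prod.nat_ivl_Suc')
    have IH1: "gq q n k' * (\<Prod>j\<in>{1..k'}. (1 - q ^ j)) = (\<Prod>j\<in>{Suc (n - k')..n}. (1 - q ^ j))"
      using Suc.IH[OF k'n] .
    have rhs: "(\<Prod>j\<in>{Suc (Suc n - Suc k')..Suc n}. (1 - q ^ j)) = (1 - q ^ Suc n) * (\<Prod>j\<in>{Suc (n - k')..n}. (1 - q ^ j))"
      using k'n by (simp add: prod.nat_ivl_Suc' Suc_diff_le)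
    show ?thesis
    proof (cases "k' = n")
      case True
      have "gq q (Suc n) k * (\<Prod>j\<in>{1..k}. (1 - q ^ j)) = gq q n n * (\<Prod>j\<in>{1..Suc n}. (1 - q ^ j))"
        using True Suc by (simp add: gq_above)
      also have "\<dots> = (1 - q ^ Suc n) * (gq q n n * (\<Prod>j\<in>{1..n}. (1 - q ^ j)))"
        by (simp add: prod.nat_ivl_Suc')
      also have "\<dots> = (1 - q ^ Suc n) * (\<Prod>j\<in>{Suc (n - n)..n}. (1 - q ^ j))"
        using IH1 True by simp
      also have "\<dots> = (\<Prod>j\<in>{Suc (Suc n - k)..Suc n}. (1 - q ^ j))"
        using rhs True Suc by simp
      finally show ?thesis .
    next
      case False
      then have k1n: "Suc k' \<le> n" using k'n by simp
      have IH2: "gq q n (Suc k') * (\<Prod>j\<in>{1..Suc k'}. (1 - q ^ j)) = (\<Prod>j\<in>{Suc (n - Suc k')..n}. (1 - q ^ j))"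
        using Suc.IH[OF k1n] .
      have sp2: "(\<Prod>j\<in>{Suc (n - Suc k')..n}. (1 - q ^ j)) = (1 - q ^ (n - k')) * (\<Prod>j\<in>{Suc (n - k')..n}. (1 - q ^ j))"
      proof -
        have "Suc (n - Suc k') = n - k'" using k1n by simp
        moreover have "n - k' \<le> n" by simp
        ultimately show ?thesis using k1n by (simp add: prod.atLeast_Suc_atMost)
      qed
      have pw: "q ^ Suc k' * q ^ (n - k') = q ^ Suc n"
        using k'n by (simp add: power_add[symmetric])
      define X where "X = (\<Prod>j\<in>{Suc (n - k')..n}. (1 - q ^ j))"
      have "gq q (Suc n) k * (\<Prod>j\<in>{1..k}. (1 - q ^ j)) =
          (1 - q ^ Suc k') * (gq q n k' * (\<Prod>j\<in>{1..k'}. (1 - q ^ j))) + q ^ Suc k' * (gq q n (Suc k') * (\<Prod>j\<in>{1..Suc k'}. (1 - q ^ j)))"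
        using Suc by (simp add: split1 algebra_simps)
      also have "\<dots> = (1 - q ^ Suc k') * X + q ^ Suc k' * ((1 - q ^ (n - k')) * X)"
        using IH1 IH2 sp2 by (simp add: X_def)
      also have "\<dots> = (1 - q ^ Suc k' * q ^ (n - k')) * X" by (simp add: algebra_simps)
      also have "\<dots> = (1 - q ^ Suc n) * X" using pw by simp
      also have "\<dots> = (\<Prod>j\<in>{Suc (Suc n - k)..Suc n}. (1 - q ^ j))" using rhs Suc by (simp add: X_def)
      finally show ?thesis .
    qed
  qed
qed

lemma gq_vanish:
  assumes "q ^ P = 1" "\<And>j. 0 < j \<Longrightarrow> j < P \<Longrightarrow> q ^ j \<noteq> 1" "0 < k" "k < P"
  shows "gq q P k = 0"
proof -
  have "gq q P k * (\<Prod>j\<in>{1..k}. (1 - q ^ j)) = (\<Prod>j\<in>{Suc (P - k)..P}. (1 - q ^ j))"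
    using gq_prod[OF less_imp_le[OF assms(4)]] .
  also have "\<dots> = 0" using assms(1,3,4) by (intro prod_zero) auto
  finally have "gq q P k * (\<Prod>j\<in>{1..k}. (1 - q ^ j)) = 0" .
  moreover have "(\<Prod>j\<in>{1..k}. (1 - q ^ j)) \<noteq> 0"
    using assms(2,4) by (auto simp: prod_zero_iff)
  ultimately show ?thesis by simp
qed

context BG begin

primrec phl :: "'i list \<Rightarrow> rat \<times> rat \<Rightarrow> 'k" where
  "phl [] = Bbas 0 0"
| "phl (i # l) = (\<lambda>m. phl l (fst m - pa i, snd m) + \<chi> (pa i * fst m) * phl l (fst m, snd m - pa i))"

lemma phl_supp: "set l \<subseteq> I \<Longrightarrow> phl l m \<noteq> 0 \<Longrightarrow> fst m \<in> Ml \<and> snd m \<in> Ml \<and> fst m + snd m = ls l"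
proof (induction l arbitrary: m)
  case Nil then show ?case by (auto simp: Bbas_def Ml_0 split: if_splits)
next
  case (Cons i l)
  have i: "i \<in> I" and l: "set l \<subseteq> I" using Cons.prems by auto
  from Cons.prems(2) have "phl l (fst m - pa i, snd m) \<noteq> 0 \<or> phl l (fst m, snd m - pa i) \<noteq> 0" by auto
  then show ?case
  proof
    assume "phl l (fst m - pa i, snd m) \<noteq> 0"
    from Cons.IH[OF l this] have h: "fst m - pa i \<in> Ml" "snd m \<in> Ml" "fst m - pa i + snd m = ls l" by auto
    have "fst m = (fst m - pa i) + pa i" by simp
    then have "fst m \<in> Ml" using Ml_add[OF h(1) Ml_pa[OF i]] by metis
    then show ?thesis using h by simp
  next
    assume "phl l (fst m, snd m - pa i) \<noteq> 0"
    from Cons.IH[OF l this] have h: "fst m \<in> Ml" "snd m - pa i \<in> Ml" "fst m + (snd m - pa i) = ls l" by auto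
    have "snd m = (snd m - pa i) + pa i" by simp
    then have "snd m \<in> Ml" using Ml_add[OF h(2) Ml_pa[OF i]] by metis
    then show ?thesis using h by simp
  qed
qed

lemma phl_zero_neg1: "set l \<subseteq> I \<Longrightarrow> fst m < 0 \<Longrightarrow> phl l m = 0"
  using phl_supp Ml_nonneg by fastforce
lemma phl_zero_neg2: "set l \<subseteq> I \<Longrightarrow> snd m < 0 \<Longrightarrow> phl l m = 0"
  using phl_supp Ml_nonneg by fastforce

lemma phl_fin: "finite (spt (phl l))"
proof (induction l)
  case Nil
  have "spt (phl []) \<subseteq> {(0,0)}" by (auto simp: spt_def Bbas_def)
  then show ?case by (rule finite_subset) simp
next
  case (Cons i l)
  have "spt (phl (i # l)) \<subseteq> (\<lambda>m. (fst m + pa i, snd m)) ` spt (phl l) \<union> (\<lambda>m. (fst m, snd m + pa i)) ` spt (phl l)"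
  proof
    fix m assume "m \<in> spt (phl (i # l))"
    then have "phl l (fst m - pa i, snd m) \<noteq> 0 \<or> phl l (fst m, snd m - pa i) \<noteq> 0" by (auto simp: spt_def)
    then show "m \<in> (\<lambda>m. (fst m + pa i, snd m)) ` spt (phl l) \<union> (\<lambda>m. (fst m, snd m + pa i)) ` spt (phl l)"
    proof
      assume "phl l (fst m - pa i, snd m) \<noteq> 0"
      then have "(fst m - pa i, snd m) \<in> spt (phl l)" by (simp add: spt_def)
      then show ?thesis by (intro UnI1) (rule image_eqI[where x="(fst m - pa i, snd m)"], auto)
    next
      assume "phl l (fst m, snd m - pa i) \<noteq> 0"
      then have "(fst m, snd m - pa i) \<in> spt (phl l)" by (simp add: spt_def)
      then show ?thesis by (intro UnI2) (rule image_eqI[where x="(fst m, snd m - pa i)"], auto)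
    qed
  qed
  then show ?case by (rule finite_subset) (use Cons in auto)
qed

lemma phl_top: "set l \<subseteq> I \<Longrightarrow> phl l (ls l, 0) = 1"
proof (induction l)
  case Nil then show ?case by (simp add: Bbas_def)
next
  case (Cons i l)
  then have "phl l (ls (i # l), 0 - pa i) = 0" using pa_pos by (intro phl_zero_neg2) auto
  with Cons show ?case by simp
qed

lemma phl_bot: "set l \<subseteq> I \<Longrightarrow> phl l (0, ls l) = 1"
proof (induction l)
  case Nil then show ?case by (simp add: Bbas_def)
next
  case (Cons i l)
  then have "phl l (0 - pa i, ls (i # l)) = 0" using pa_pos by (intro phl_zero_neg1) auto
  with Cons show ?case by (simp add: chi0)
qed

lemma chi_shift: "i \<in> I \<Longrightarrow> j \<in> I \<Longrightarrow> i \<noteq> j \<Longrightarrow> e \<in> Ml \<Longrightarrow> \<chi> (pa j * (e + pa i)) = \<chi> (pa j * e)"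
proof -
  assume i: "i \<in> I" and j: "j \<in> I" and ij: "i \<noteq> j" and e: "e \<in> Ml"
  have "\<chi> (pa j * (e + pa i)) = \<chi> (pa j * e) * \<chi> (pa j * pa i)"
    by (rule chi_lin_r[OF pa_G[OF j] e Ml_pa[OF i]])
  moreover have "\<chi> (pa j * pa i) = 1" using chi_cross[OF j i] ij by simp
  ultimately show ?thesis by simp
qed

lemma phl_swap:
  assumes i: "i \<in> I" and j: "j \<in> I" and l: "set l \<subseteq> I"
  shows "phl (i # j # l) = phl (j # i # l)"
proof (cases "i = j")
  case True then show ?thesis by simp
next
  case False
  show ?thesis
  proof
    fix m :: "rat \<times> rat"
    obtain x y where m: "m = (x, y)" by (cases m)
    have A: "\<chi> (pa j * (x - pa i)) * phl l (x - pa i, y - pa j) = \<chi> (pa j * x) * phl l (x - pa i, y - pa j)"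
    proof (cases "phl l (x - pa i, y - pa j) = 0")
      case False
      then have "x - pa i \<in> Ml" using phl_supp[OF l] by fastforce
      then have "\<chi> (pa j * ((x - pa i) + pa i)) = \<chi> (pa j * (x - pa i))"
        using chi_shift[OF i j \<open>i \<noteq> j\<close>] by blast
      then show ?thesis by simp
    qed simp
    have B: "\<chi> (pa i * (x - pa j)) * phl l (x - pa j, y - pa i) = \<chi> (pa i * x) * phl l (x - pa j, y - pa i)"
    proof (cases "phl l (x - pa j, y - pa i) = 0")
      case False
      then have "x - pa j \<in> Ml" using phl_supp[OF l] by fastforce
      then have "\<chi> (pa i * ((x - pa j) + pa j)) = \<chi> (pa i * (x - pa j))"
        using chi_shift[OF j i] \<open>i \<noteq> j\<close> by metis
      then show ?thesis by simp
    qed simp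
    have e1: "x - pa i - pa j = x - pa j - pa i" "y - pa i - pa j = y - pa j - pa i" by (simp_all add: algebra_simps)
    have "phl (i # j # l) m = phl l (x - pa i - pa j, y) + \<chi> (pa j * (x - pa i)) * phl l (x - pa i, y - pa j)
        + (\<chi> (pa i * x) * phl l (x - pa j, y - pa i) + \<chi> (pa i * x) * (\<chi> (pa j * x) * phl l (x, y - pa i - pa j)))"
      by (simp add: m distrib_left)
    also have "\<dots> = phl l (x - pa j - pa i, y) + \<chi> (pa i * (x - pa j)) * phl l (x - pa j, y - pa i)
        + (\<chi> (pa j * x) * phl l (x - pa i, y - pa j) + \<chi> (pa j * x) * (\<chi> (pa i * x) * phl l (x, y - pa j - pa i)))"
      unfolding A B e1 by (simp add: algebra_simps)
    also have "\<dots> = phl (j # i # l) m"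
      by (simp add: m distrib_left)
    finally show "phl (i # j # l) m = phl (j # i # l) m" .
  qed
qed

lemma phl_cons_cong: "phl l0 = phl l1 \<Longrightarrow> phl (j # l0) = phl (j # l1)"
  by simp

lemma phl_remove1: "set l \<subseteq> I \<Longrightarrow> i \<in> set l \<Longrightarrow> phl l = phl (i # remove1 i l)"
proof (induction l)
  case Nil then show ?case by simp
next
  case (Cons j l0)
  show ?case
  proof (cases "j = i")
    case True then show ?thesis by simp
  next
    case False
    then have il0: "i \<in> set l0" using Cons.prems by simp
    have l0: "set l0 \<subseteq> I" using Cons.prems by simp
    have "phl (j # l0) = phl (j # i # remove1 i l0)"
      by (rule phl_cons_cong) (rule Cons.IH[OF l0 il0])
    also have "\<dots> = phl (i # j # remove1 i l0)"
      by (rule phl_swap) (use Cons.prems il0 l0 set_remove1_subset[of i l0] in auto)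
    also have "\<dots> = phl (i # remove1 i (j # l0))" using False by simp
    finally show ?thesis .
  qed
qed

lemma phl_perm: "set l \<subseteq> I \<Longrightarrow> mset l = mset l' \<Longrightarrow> phl l = phl l'"
proof (induction l arbitrary: l')
  case Nil then show ?case by simp
next
  case (Cons i l)
  have il': "i \<in> set l'" using Cons.prems(2) by (metis list.set_intros(1) mset_eq_setD)
  have sl': "set l' \<subseteq> I" using Cons.prems by (metis mset_eq_setD)
  have "phl l' = phl (i # remove1 i l')" by (rule phl_remove1[OF sl' il'])
  moreover have "mset l = mset (remove1 i l')" using Cons.prems(2)[symmetric] by simp
  then have "phl l = phl (remove1 i l')" using Cons.IH Cons.prems(1) by simp
  ultimately show ?case by simp
qed

lemma phl_rep_supp: "i \<in> I \<Longrightarrow> phl (replicate n i) m \<noteq> 0 \<Longrightarrow> \<exists>k\<le>n. m = (of_nat k * pa i, of_nat (n - k) * pa i)"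
proof (induction n arbitrary: m)
  case 0 then show ?case by (auto simp: Bbas_def split: if_splits)
next
  case (Suc n)
  from Suc.prems(2) have "phl (replicate n i) (fst m - pa i, snd m) \<noteq> 0 \<or> phl (replicate n i) (fst m, snd m - pa i) \<noteq> 0"
    by auto
  then show ?case
  proof
    assume "phl (replicate n i) (fst m - pa i, snd m) \<noteq> 0"
    then obtain k where k: "k \<le> n" "(fst m - pa i, snd m) = (of_nat k * pa i, of_nat (n - k) * pa i)"
      using Suc.IH Suc.prems(1) by blast
    then have "m = (of_nat (Suc k) * pa i, of_nat (Suc n - Suc k) * pa i)"
      by (cases m) (auto simp: algebra_simps)
    then show ?thesis using k by blast
  next
    assume "phl (replicate n i) (fst m, snd m - pa i) \<noteq> 0"
    then obtain k where k: "k \<le> n" "(fst m, snd m - pa i) = (of_nat k * pa i, of_nat (n - k) * pa i)"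
      using Suc.IH Suc.prems(1) by blast
    then have "m = (of_nat k * pa i, of_nat (Suc n - k) * pa i)"
      by (cases m) (auto simp: algebra_simps Suc_diff_le)
    then show ?thesis using k(1) le_SucI by blast
  qed
qed

lemma count_rep: "count_list (replicate k i) i = k"
  by (induction k) auto

lemma chi_pa_k: "i \<in> I \<Longrightarrow> \<chi> (pa i * (of_nat k * pa i)) = q i ^ k"
  using chi_pa_ls[of i "replicate k i"] by (simp add: rep_sub count_rep)

lemma phl_rep_val: "i \<in> I \<Longrightarrow> k \<le> n \<Longrightarrow> phl (replicate n i) (of_nat k * pa i, of_nat (n - k) * pa i) = gq (q i) n k"
proof (induction n arbitrary: k)
  case 0 then show ?case by (simp add: Bbas_def)
next
  case (Suc n)
  have i: "i \<in> I" using Suc.prems by simp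
  have t1: "phl (replicate n i) (of_nat k * pa i - pa i, of_nat (Suc n - k) * pa i) = (if k = 0 then 0 else gq (q i) n (k - 1))"
  proof (cases k)
    case 0 then show ?thesis using pa_pos[OF i] by (simp add: phl_zero_neg1 rep_sub[OF i])
  next
    case (Suc k')
    then have "of_nat k * pa i - pa i = of_nat k' * pa i" "Suc n - k = n - k'"
      by (simp_all add: algebra_simps)
    then show ?thesis using Suc.IH[OF i, of k'] Suc.prems Suc by simp
  qed
  have t2: "phl (replicate n i) (of_nat k * pa i, of_nat (Suc n - k) * pa i - pa i) = gq (q i) n k"
  proof (cases "k = Suc n")
    case True then show ?thesis using pa_pos[OF i] by (simp add: phl_zero_neg2 rep_sub[OF i] gq_above)
  next
    case False
    then have kn: "k \<le> n" using Suc.prems by simp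
    then have "of_nat (Suc n - k) * pa i - pa i = of_nat (n - k) * pa i"
      by (simp add: Suc_diff_le algebra_simps)
    then show ?thesis using Suc.IH[OF i kn] by simp
  qed
  show ?case using t1 t2 chi_pa_k[OF i] by simp
qed

lemma phl_Y: "i \<in> I \<Longrightarrow> phl (replicate (p i) i) = (\<lambda>m. Bbas 1 0 m + Bbas 0 1 m)"
proof
  fix m :: "rat \<times> rat"
  assume i: "i \<in> I"
  have pm: "of_nat (p i) * pa i = 1" using pa_mult[OF i] .
  have qv: "\<And>k. 0 < k \<Longrightarrow> k < p i \<Longrightarrow> gq (q i) (p i) k = 0"
    by (rule gq_vanish) (use q_p[OF i] q_ne[OF i] in auto)
  show "phl (replicate (p i) i) m = Bbas 1 0 m + Bbas 0 1 m"
  proof (cases "m = (1, 0)")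
    case True
    then show ?thesis using phl_rep_val[OF i, of "p i" "p i"] pm by (simp add: Bbas_def gq_diag)
  next
    case F1: False
    show ?thesis
    proof (cases "m = (0, 1)")
      case True
      then show ?thesis using phl_rep_val[OF i, of 0 "p i"] pm by (simp add: Bbas_def gq_0)
    next
      case F2: False
      have "phl (replicate (p i) i) m = 0"
      proof (rule ccontr)
        assume ne: "phl (replicate (p i) i) m \<noteq> 0"
        then obtain k where k: "k \<le> p i" "m = (of_nat k * pa i, of_nat (p i - k) * pa i)"
          using phl_rep_supp[OF i] by blast
        have "k \<noteq> 0"
        proof
          assume "k = 0" then have "m = (0, 1)" using k pm by simp
          with F2 show False by simp
        qed
        moreover have "k \<noteq> p i"
        proof
          assume "k = p i" then have "m = (1, 0)" using k pm by simp
          with F1 show False by simp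
        qed
        ultimately have "gq (q i) (p i) k = 0" using qv k by simp
        then show False using ne k phl_rep_val[OF i k(1)] by simp
      qed
      then show ?thesis using F1 F2 by (simp add: Bbas_def)
    qed
  qed
qed

end

context BG begin

definition sg :: "rat \<times> rat \<Rightarrow> rat \<times> rat \<Rightarrow> 'k" where "sg u v = \<chi> (snd u * fst v)"

lemma phl_single: "i \<in> I \<Longrightarrow> phl [i] m = Bbas (pa i) 0 m + Bbas 0 (pa i) m"
  using pa_pos[of i] by (cases m) (auto simp: Bbas_def chi0)

lemma phl_single_spt: "i \<in> I \<Longrightarrow> spt (phl [i]) \<subseteq> {(pa i, 0), (0, pa i)}"
  by (auto simp: spt_def phl_single Bbas_def split: if_splits)

lemma phl_cons_cv:
  assumes i: "i \<in> I" and l: "set l \<subseteq> I"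
  shows "phl (i # l) = cv sg (phl [i]) (phl l)"
proof
  fix m :: "rat \<times> rat"
  obtain x y where m: "m = (x, y)" by (cases m)
  have ne: "(pa i, 0) \<noteq> (0, pa i)" using pa_pos[OF i] by simp
  have "cv sg (phl [i]) (phl l) m = (\<Sum>u\<in>{(pa i, 0), (0, pa i)}. phl [i] u * phl l (m - u) * sg u (m - u))"
    by (rule cv_left[OF _ phl_single_spt[OF i] phl_fin]) simp
  also have "\<dots> = phl l (x - pa i, y) + \<chi> (pa i * x) * phl l (x, y - pa i)"
    using ne pa_pos[OF i] by (simp add: m phl_single Bbas_def sg_def chi0)
  finally show "phl (i # l) m = cv sg (phl [i]) (phl l) m" by (simp add: m)
qed

lemma sg_coc:
  assumes "snd u \<in> Ml" "snd v \<in> Ml" "fst v \<in> Ml" "fst w \<in> Ml"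
  shows "sg u v * sg (u + v) w = sg v w * sg u (v + w)"
proof -
  have "sg (u + v) w = \<chi> (snd u * fst w) * \<chi> (snd v * fst w)"
    unfolding sg_def using chi_lin_l[OF Ml_G Ml_G] assms by simp
  moreover have "sg u (v + w) = \<chi> (snd u * fst v) * \<chi> (snd u * fst w)"
    unfolding sg_def using chi_lin_r[OF Ml_G] assms by simp
  ultimately show ?thesis by (simp add: sg_def mult_ac)
qed

lemma phl_spt_Ml: "set l \<subseteq> I \<Longrightarrow> u \<in> spt (phl l) \<Longrightarrow> fst u \<in> Ml \<and> snd u \<in> Ml"
  using phl_supp by (auto simp: spt_def)

lemma phl_append: "set l1 \<subseteq> I \<Longrightarrow> set l2 \<subseteq> I \<Longrightarrow> phl (l1 @ l2) = cv sg (phl l1) (phl l2)"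
proof (induction l1)
  case Nil
  show ?case
  proof
    fix m :: "rat \<times> rat"
    have "spt (phl [] :: _ \<Rightarrow> 'k) \<subseteq> {(0,0)}" by (auto simp: spt_def Bbas_def split: if_splits)
    then have "cv sg (phl []) (phl l2) m = (\<Sum>u\<in>{(0,0)}. phl [] u * phl l2 (m - u) * sg u (m - u))"
      by (intro cv_left phl_fin) auto
    then show "phl ([] @ l2) m = cv sg (phl []) (phl l2) m" by (cases m) (simp add: Bbas_def sg_def chi0)
  qed
next
  case (Cons i l1)
  have i: "i \<in> I" and l1: "set l1 \<subseteq> I" using Cons.prems by auto
  have "phl ((i # l1) @ l2) = cv sg (phl [i]) (phl (l1 @ l2))"
    using phl_cons_cv[OF i] l1 Cons.prems by simp
  also have "\<dots> = cv sg (phl [i]) (cv sg (phl l1) (phl l2))" using Cons.IH l1 Cons.prems by simp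
  also have "\<dots> = cv sg (cv sg (phl [i]) (phl l1)) (phl l2)"
    by (rule cv_assoc[symmetric, OF phl_fin phl_fin phl_fin], rule sg_coc)
       (use phl_spt_Ml[of "[i]"] phl_spt_Ml[OF l1] phl_spt_Ml[of l2] i Cons.prems in auto)
  also have "\<dots> = cv sg (phl (i # l1)) (phl l2)" using phl_cons_cv[OF i l1] by simp
  finally show ?case .
qed

lemma phl_blocks:
  assumes i: "i \<in> I" and j: "j \<in> I" and r: "set r \<subseteq> I"
  shows "phl (replicate (p i) i @ r) = phl (replicate (p j) j @ r)"
proof -
  have "phl (replicate (p i) i @ r) = cv sg (phl (replicate (p i) i)) (phl r)" by (rule phl_append[OF rep_sub[OF i] r])
  moreover have "phl (replicate (p j) j @ r) = cv sg (phl (replicate (p j) j)) (phl r)" by (rule phl_append[OF rep_sub[OF j] r])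
  ultimately show ?thesis using phl_Y[OF i] phl_Y[OF j] by simp
qed

lemma extract_rep:
  assumes "n \<le> count_list l i"
  shows "\<exists>r. mset l = mset (replicate n i @ r)"
proof -
  obtain r where r: "mset r = mset l - replicate_mset n i" using ex_mset by blast
  have "replicate_mset n i \<subseteq># mset l"
    using assms by (simp add: count_le_replicate_mset_subset_eq[symmetric] count_mset)
  then have "mset (replicate n i @ r) = mset l" using r by (simp add: subset_mset.add_diff_inverse)
  then show ?thesis by metis
qed

lemma phl_indep: "set l \<subseteq> I \<Longrightarrow> set l' \<subseteq> I \<Longrightarrow> ls l = ls l' \<Longrightarrow> phl l = phl l'"
proof (induction "length l + length l'" arbitrary: l l' rule: less_induct)
  case less
  note sl = less.prems(1) and sl' = less.prems(2) and eq = less.prems(3)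
  show ?case
  proof (cases "l = [] \<or> l' = []")
    case True
    then have "l = [] \<and> l' = []" using eq ls_zero[OF sl] ls_zero[OF sl'] by auto
    then show ?thesis by simp
  next
    case False
    then have ln: "l \<noteq> []" and ln': "l' \<noteq> []" by auto
    show ?thesis
    proof (cases "\<exists>i. i \<in> set l \<and> i \<in> set l'")
      case True
      then obtain i where i: "i \<in> set l" "i \<in> set l'" by blast
      have r1: "phl l = phl (i # remove1 i l)" by (rule phl_remove1[OF sl i(1)])
      have r2: "phl l' = phl (i # remove1 i l')" by (rule phl_remove1[OF sl' i(2)])
      have "ls (remove1 i l) = ls (remove1 i l')"
        using ls_remove1[OF i(1)] ls_remove1[OF i(2)] eq by simp
      moreover have "length (remove1 i l) + length (remove1 i l') < length l + length l'"
      proof -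
        have "length l \<ge> 1" "length l' \<ge> 1" using length_pos_if_in_set[OF i(1)] length_pos_if_in_set[OF i(2)] by linarith+
        then show ?thesis using i by (simp add: length_remove1)
      qed
      moreover have "set (remove1 i l) \<subseteq> I" "set (remove1 i l') \<subseteq> I"
        using sl sl' set_remove1_subset[of i l] set_remove1_subset[of i l'] by auto
      ultimately have "phl (remove1 i l) = phl (remove1 i l')" using less.hyps by blast
      then show ?thesis using r1 r2 by simp
    next
      case False
      define i where "i = hd l"
      define j where "j = hd l'"
      have il: "i \<in> set l" and jl': "j \<in> set l'" using ln ln' by (auto simp: i_def j_def)
      have iI: "i \<in> I" and jI: "j \<in> I" using il jl' sl sl' by auto
      have "i \<notin> set l'" using False il by blast
      then have "count_list l' i = 0" by (simp add: count_list_0_iff)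
      then have d: "int (p i) dvd int (count_list l i)" using cong_counts[OF sl sl' eq iI] by simp
      have "count_list l i \<noteq> 0" using il by (simp add: count_list_0_iff)
      then have ci: "p i \<le> count_list l i" using d by (simp add: dvd_imp_le)
      have "j \<notin> set l" using False jl' by blast
      then have "count_list l j = 0" by (simp add: count_list_0_iff)
      then have d': "int (p j) dvd int (count_list l' j)" using cong_counts[OF sl sl' eq jI] by simp
      have "count_list l' j \<noteq> 0" using jl' by (simp add: count_list_0_iff)
      then have cj: "p j \<le> count_list l' j" using d' by (simp add: dvd_imp_le)
      obtain r where r: "mset l = mset (replicate (p i) i @ r)" using extract_rep[OF ci] by blast
      obtain r' where r': "mset l' = mset (replicate (p j) j @ r')" using extract_rep[OF cj] by blast
      have sr: "set r \<subseteq> I" using r sl by (metis le_sup_iff mset_eq_setD set_append)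
      have sr': "set r' \<subseteq> I" using r' sl' by (metis le_sup_iff mset_eq_setD set_append)
      have "ls l = 1 + ls r" using ls_mset[OF r] pa_mult[OF iI] by simp
      moreover have "ls l' = 1 + ls r'" using ls_mset[OF r'] pa_mult[OF jI] by simp
      ultimately have lr: "ls r = ls r'" using eq by simp
      have "length l = p i + length r" using r by (metis length_append length_replicate size_mset)
      moreover have "length l' = p j + length r'" using r' by (metis length_append length_replicate size_mset)
      moreover have "p i > 0" "p j > 0" using p2 iI jI by force+
      ultimately have "length r + length r' < length l + length l'" by simp
      then have prr: "phl r = phl r'" using less.hyps sr sr' lr by blast
      have "phl l = phl (replicate (p i) i @ r)" by (rule phl_perm[OF sl r])
      also have "\<dots> = phl (replicate (p j) j @ r)" by (rule phl_blocks[OF iI jI sr])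
      also have "\<dots> = cv sg (phl (replicate (p j) j)) (phl r)" by (rule phl_append[OF rep_sub[OF jI] sr])
      also have "\<dots> = cv sg (phl (replicate (p j) j)) (phl r')" using prr by simp
      also have "\<dots> = phl (replicate (p j) j @ r')" by (rule phl_append[OF rep_sub[OF jI] sr', symmetric])
      also have "\<dots> = phl l'" by (rule phl_perm[OF _ r'[symmetric]]) (use sr' jI in auto)
      finally show ?thesis .
    qed
  qed
qed

definition phi :: "rat \<Rightarrow> rat \<times> rat \<Rightarrow> 'k" where
  "phi b = phl (SOME l. set l \<subseteq> I \<and> ls l = b)"

lemma phi_ls: "set l \<subseteq> I \<Longrightarrow> phi (ls l) = phl l"
proof -
  assume l: "set l \<subseteq> I"
  have "\<exists>l'. set l' \<subseteq> I \<and> ls l' = ls l" using l by blast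
  then have "set (SOME l'. set l' \<subseteq> I \<and> ls l' = ls l) \<subseteq> I \<and> ls (SOME l'. set l' \<subseteq> I \<and> ls l' = ls l) = ls l"
    by (rule someI_ex)
  then show ?thesis unfolding phi_def using phl_indep l by blast
qed

lemma phi_Ml: "b \<in> Ml \<Longrightarrow> \<exists>l. set l \<subseteq> I \<and> b = ls l \<and> phi b = phl l"
  using phi_ls by (auto simp: Ml_def)

lemma phi_fin: "b \<in> Ml \<Longrightarrow> finite (spt (phi b))"
  using phi_Ml phl_fin by metis

lemma phi_supp: "b \<in> Ml \<Longrightarrow> phi b m \<noteq> 0 \<Longrightarrow> fst m \<in> Ml \<and> snd m \<in> Ml \<and> fst m + snd m = b"
  using phi_Ml phl_supp by metis

lemma phi_top: "b \<in> Ml \<Longrightarrow> phi b (b, 0) = 1"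
  using phi_Ml phl_top by metis

lemma phi_bot: "b \<in> Ml \<Longrightarrow> phi b (0, b) = 1"
  using phi_Ml phl_bot by metis

lemma phi_mult: "b \<in> Ml \<Longrightarrow> b' \<in> Ml \<Longrightarrow> cv sg (phi b) (phi b') = phi (b + b')"
proof -
  assume "b \<in> Ml" "b' \<in> Ml"
  then obtain l l' where "set l \<subseteq> I" "set l' \<subseteq> I" "b = ls l" "b' = ls l'" by (auto simp: Ml_def)
  then show ?thesis using phl_append phi_ls[of "l @ l'"] phi_ls[of l] phi_ls[of l'] by simp
qed

lemma phi_0: "phi 0 = Bbas 0 0"
  using phi_ls[of "[]"] by simp

lemma phi_pa: "i \<in> I \<Longrightarrow> phi (pa i) = phl [i]"
  using phi_ls[of "[i]"] by simp

lemma phi_spt_Ml: "b \<in> Ml \<Longrightarrow> u \<in> spt (phi b) \<Longrightarrow> fst u \<in> Ml \<and> snd u \<in> Ml"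
  using phi_supp by (auto simp: spt_def)

lemma kappa: "i \<in> I \<Longrightarrow> set l \<subseteq> I \<Longrightarrow> phl l (ls l - pa i, pa i) = (\<Sum>t<count_list l i. q i ^ t)"
proof (induction l)
  case Nil then show ?case using pa_pos[of i] by (simp add: Bbas_def)
next
  case (Cons j l)
  have j: "j \<in> I" and l: "set l \<subseteq> I" using Cons.prems by auto
  have e1: "pa j + ls l - pa i - pa j = ls l - pa i" by simp
  show ?case
  proof (cases "j = i")
    case True
    have "phl (j # l) (ls (j # l) - pa i, pa i) = phl l (ls l - pa i, pa i) + \<chi> (pa i * ls l) * phl l (ls l, 0)"
      using True by simp
    also have "\<dots> = (\<Sum>t<count_list l i. q i ^ t) + q i ^ count_list l i"
      using Cons.IH[OF Cons.prems(1) l] chi_pa_ls[OF Cons.prems(1) l] phl_top[OF l] by simp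
    finally show ?thesis using True by simp
  next
    case False
    have "phl l (pa j + ls l - pa i, pa i - pa j) = 0"
    proof (rule ccontr)
      assume "phl l (pa j + ls l - pa i, pa i - pa j) \<noteq> 0"
      then have "pa i - pa j \<in> Ml" using phl_supp[OF l] by fastforce
      then show False using pa_diff_notM[OF Cons.prems(1) j] False by auto
    qed
    then have "phl (j # l) (ls (j # l) - pa i, pa i) = phl l (ls l - pa i, pa i)"
      by simp
    then show ?thesis using Cons.IH[OF Cons.prems(1) l] False by simp
  qed
qed

lemma geom_ne: "i \<in> I \<Longrightarrow> \<not> p i dvd n \<Longrightarrow> (\<Sum>t<n. q i ^ t) \<noteq> 0"
proof
  assume i: "i \<in> I" and nd: "\<not> p i dvd n" and z: "(\<Sum>t<n. q i ^ t) = 0"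
  have "1 - q i ^ n = (1 - q i) * (\<Sum>t<n. q i ^ t)" by (rule one_diff_power_eq)
  then have "q i ^ n = 1" using z by simp
  then have "q i ^ (n mod p i) = 1" using q_mod[OF i] by simp
  moreover have "0 < n mod p i" using nd by (simp add: mod_greater_zero_iff_not_dvd)
  moreover have "n mod p i < p i" using p2 i by (metis mod_less_divisor not_numeral_le_zero not_gr_zero)
  ultimately show False using q_ne[OF i] by blast
qed

definition LL :: "'i \<Rightarrow> nat \<Rightarrow> 'i list" where "LL i m = concat (replicate m (replicate (p i) i))"

lemma LL_sub: "i \<in> I \<Longrightarrow> set (LL i m) \<subseteq> I" by (auto simp: LL_def)
lemma LL_ls: "i \<in> I \<Longrightarrow> ls (LL i m) = of_nat m"
  unfolding LL_def ls_concat using pa_mult[of i] by (simp add: sum_list_replicate)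

lemma phl_Ystep:
  assumes i: "i \<in> I" and r: "set r \<subseteq> I"
  shows "phl (replicate (p i) i @ r) (x, y) = phl r (x - 1, y) + \<chi> x * phl r (x, y - 1)"
proof -
  have sY: "spt (phl (replicate (p i) i)) \<subseteq> {(1,0), (0,1)}"
    using phl_Y[OF i] by (auto simp: spt_def Bbas_def split: if_splits)
  have "phl (replicate (p i) i @ r) (x, y) = cv sg (phl (replicate (p i) i)) (phl r) (x, y)"
    using phl_append[OF rep_sub[OF i] r] by simp
  also have "\<dots> = (\<Sum>u\<in>{(1,0), (0,1)}. phl (replicate (p i) i) u * phl r ((x, y) - u) * sg u ((x, y) - u))"
    by (rule cv_left[OF _ sY phl_fin]) simp
  also have "\<dots> = phl r (x - 1, y) + \<chi> x * phl r (x, y - 1)"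
    using phl_Y[OF i] by (simp add: Bbas_def sg_def chi0)
  finally show ?thesis .
qed

lemma lam: "i \<in> I \<Longrightarrow> phl (LL i (Suc m)) (of_nat m, 1) = of_nat (Suc m)"
proof (induction m)
  case 0
  then show ?case using phl_Y[of i] by (simp add: LL_def Bbas_def)
next
  case (Suc m)
  have i: "i \<in> I" using Suc.prems .
  have LS: "LL i (Suc (Suc m)) = replicate (p i) i @ LL i (Suc m)" by (simp add: LL_def)
  have "phl (LL i (Suc (Suc m))) (of_nat (Suc m), 1) =
      phl (LL i (Suc m)) (of_nat m, 1) + \<chi> (of_nat (Suc m)) * phl (LL i (Suc m)) (of_nat (Suc m), 0)"
    unfolding LS using phl_Ystep[OF i LL_sub[OF i]] by simp
  also have "\<chi> (of_nat (Suc m)) = 1" using chi_ls[OF LL_sub[OF i], of "Suc m"] LL_ls[OF i] by simp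
  also have "phl (LL i (Suc m)) (of_nat (Suc m), 0) = 1" using phl_top[OF LL_sub[OF i], of "Suc m"] LL_ls[OF i] by simp
  finally show ?case using Suc.IH[OF i] by simp
qed

lemma middle:
  assumes b: "b \<in> Ml" and b0: "b \<noteq> 0" and b1: "b \<noteq> 1" and bp: "\<forall>i\<in>I. b \<noteq> pa i"
  shows "\<exists>e1 e2. e1 \<noteq> 0 \<and> e2 \<noteq> 0 \<and> phi b (e1, e2) \<noteq> 0"
proof -
  obtain l where l: "set l \<subseteq> I" "b = ls l" using b by (auto simp: Ml_def)
  show ?thesis
  proof (cases "\<exists>i\<in>set l. \<not> p i dvd count_list l i")
    case True
    then obtain i where i: "i \<in> set l" "\<not> p i dvd count_list l i" by blast
    have iI: "i \<in> I" using i l by auto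
    have "phi b (ls l - pa i, pa i) \<noteq> 0"
      using phi_ls[OF l(1)] kappa[OF iI l(1)] geom_ne[OF iI i(2)] l(2) by simp
    moreover have "ls l - pa i \<noteq> 0" using bp iI l by auto
    moreover have "pa i \<noteq> 0" using pa_pos[OF iI] by simp
    ultimately show ?thesis by blast
  next
    case False
    define N where "N = (\<Sum>i\<in>set l. count_list l i div p i)"
    have "b = (\<Sum>i\<in>set l. of_nat (count_list l i) * pa i)" using ls_count[OF order_refl] l by simp
    also have "\<dots> = (\<Sum>i\<in>set l. of_nat (count_list l i div p i))"
    proof (rule sum.cong[OF refl])
      fix i assume i: "i \<in> set l"
      then have "count_list l i = p i * (count_list l i div p i)" using False by simp
      then have "of_nat (count_list l i) * pa i = of_nat (count_list l i div p i) * (of_nat (p i) * pa i)"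
        by (metis (no_types, lifting) mult.assoc mult.commute of_nat_mult)
      then show "of_nat (count_list l i) * pa i = of_nat (count_list l i div p i)"
        using pa_mult[of i] i l by auto
    qed
    also have "\<dots> = of_nat N" by (simp add: N_def)
    finally have bN: "b = of_nat N" .
    have "N \<noteq> 0" "N \<noteq> 1" using bN b0 b1 by auto
    then obtain M where M: "N = Suc M" "M \<noteq> 0" by (cases N) auto
    have "l \<noteq> []" using l b0 by auto
    then obtain i where i: "i \<in> set l" by (cases l) auto
    have iI: "i \<in> I" using i l by auto
    have "phi b = phl (LL i N)" using phi_ls[OF LL_sub[OF iI], of N] LL_ls[OF iI] bN by simp
    then have "phi b (of_nat M, 1) = of_nat (Suc M)" using lam[OF iI] M by simp
    then have "phi b (of_nat M, 1) \<noteq> 0" by (simp del: of_nat_Suc)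
    moreover have "(of_nat M :: rat) \<noteq> 0" using M by simp
    ultimately show ?thesis by (intro exI[of _ "of_nat M"] exI[of _ 1]) simp
  qed
qed

end

lemma cv_smul: "cv \<tau> (\<lambda>x. s * F x) (\<lambda>y. t * H y) m = s * t * cv \<tau> F H m"
proof (cases "s = 0 \<or> t = 0")
  case True then show ?thesis by (auto simp: cv_def)
next
  case False
  then have "{(u, v). s * F u \<noteq> 0 \<and> t * H v \<noteq> 0 \<and> u + v = m} = {(u, v). F u \<noteq> 0 \<and> H v \<noteq> 0 \<and> u + v = m}"
    by auto
  then show ?thesis unfolding cv_def by (simp add: sum_distrib_left mult_ac)
qed

context BG begin

definition io :: "rat \<Rightarrow> (rat \<times> rat \<Rightarrow> 'k) \<Rightarrow> (rat \<times> rat) \<times> (rat \<times> rat) \<Rightarrow> 'k" where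
  "io a c M = (if snd (snd M) = a \<and> snd (fst M) = fst (snd M) + a then c (fst (fst M), fst (snd M)) else 0)"

definition jm :: "rat \<Rightarrow> rat \<times> rat \<Rightarrow> (rat \<times> rat) \<times> (rat \<times> rat)" where
  "jm a e = ((fst e, snd e + a), (snd e, a))"

definition D0 :: "rat \<times> rat \<Rightarrow> (rat \<times> rat) \<times> (rat \<times> rat) \<Rightarrow> 'k" where
  "D0 m = io (snd m) (phi (fst m))"

definition tauT :: "(rat \<times> rat) \<times> (rat \<times> rat) \<Rightarrow> (rat \<times> rat) \<times> (rat \<times> rat) \<Rightarrow> 'k" where
  "tauT U V = \<chi> (snd (fst U) * fst (fst V)) * \<chi> (snd (snd U) * fst (snd V))"

lemma io_jm: "io a c (jm a e) = c e" by (simp add: io_def jm_def)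

lemma jm_inj: "inj (jm a)" by (auto simp: inj_def jm_def prod_eq_iff)

lemma io_spt: "spt (io a c) \<subseteq> jm a ` spt c"
proof
  fix M assume "M \<in> spt (io a c)"
  then have h: "snd (snd M) = a" "snd (fst M) = fst (snd M) + a" "c (fst (fst M), fst (snd M)) \<noteq> 0"
    by (auto simp: spt_def io_def split: if_splits)
  then have "M = jm a (fst (fst M), fst (snd M))" by (simp add: jm_def prod_eq_iff)
  then show "M \<in> jm a ` spt c" using h(3) by (auto simp: spt_def)
qed

lemma io_fin: "finite (spt c) \<Longrightarrow> finite (spt (io a c))"
  using io_spt finite_subset by blast

lemma io_Tmul:
  assumes fc: "finite (spt c)" and fc': "finite (spt c')"
  shows "cv tauT (io a c) (io a' c') = io (a + a') (cv (\<lambda>e f. \<chi> ((snd e + a) * fst f) * \<chi> (a * snd f)) c c')"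
proof
  fix M :: "(rat \<times> rat) \<times> (rat \<times> rat)"
  let ?s = "\<lambda>e f. \<chi> ((snd e + a) * fst f) * \<chi> (a * snd f)"
  have "cv tauT (io a c) (io a' c') M = (\<Sum>x\<in>jm a ` spt c. \<Sum>y\<in>jm a' ` spt c'. if x + y = M then io a c x * io a' c' y * tauT x y else 0)"
    by (rule cv_sup) (use fc fc' io_spt in auto)
  also have "\<dots> = (\<Sum>e\<in>spt c. \<Sum>f\<in>spt c'. if jm a e + jm a' f = M then io a c (jm a e) * io a' c' (jm a' f) * tauT (jm a e) (jm a' f) else 0)"
    by (simp add: sum.reindex inj_on_subset[OF jm_inj])
  also have "\<dots> = (\<Sum>e\<in>spt c. \<Sum>f\<in>spt c'. if jm a e + jm a' f = M then c e * c' f * ?s e f else 0)"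
  proof -
    have tj: "tauT (jm a e) (jm a' f) = ?s e f" for e f by (simp add: tauT_def jm_def)
    show ?thesis by (simp only: io_jm tj)
  qed
  also have "\<dots> = io (a + a') (cv ?s c c') M"
  proof (cases "snd (snd M) = a + a' \<and> snd (fst M) = fst (snd M) + (a + a')")
    case True
    have iff: "(jm a e + jm a' f = M) = (e + f = (fst (fst M), fst (snd M)))" for e f
    proof
      assume "jm a e + jm a' f = M"
      then show "e + f = (fst (fst M), fst (snd M))" by (auto simp: jm_def prod_eq_iff)
    next
      assume h: "e + f = (fst (fst M), fst (snd M))"
      then have "fst e + fst f = fst (fst M)" "snd e + snd f = fst (snd M)" by (auto simp: prod_eq_iff)
      then show "jm a e + jm a' f = M" using True by (simp add: jm_def prod_eq_iff)
    qed
    have "io (a + a') (cv ?s c c') M = cv ?s c c' (fst (fst M), fst (snd M))"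
      using True by (simp add: io_def)
    also have "\<dots> = (\<Sum>e\<in>spt c. \<Sum>f\<in>spt c'. if e + f = (fst (fst M), fst (snd M)) then c e * c' f * ?s e f else 0)"
      by (rule cv_sup[OF fc fc']) auto
    finally show ?thesis by (simp only: iff)
  next
    case False
    have ne: "jm a e + jm a' f \<noteq> M" for e f
    proof
      assume h: "jm a e + jm a' f = M"
      then have "snd (snd M) = a + a'" "snd (fst M) = fst (snd M) + (a + a')" by (auto simp: jm_def)
      with False show False by simp
    qed
    show ?thesis using False by (auto simp: io_def ne)
  qed
  finally show "cv tauT (io a c) (io a' c') M = io (a + a') (cv ?s c c') M" .
qed

lemma twist_simp:
  assumes a: "a \<in> G" and sc: "\<And>e. e \<in> spt c \<Longrightarrow> snd e \<in> Ml"
    and sc': "\<And>f. f \<in> spt c' \<Longrightarrow> fst f \<in> Ml \<and> snd f \<in> Ml \<and> fst f + snd f = b'"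
  shows "cv (\<lambda>e f. \<chi> ((snd e + a) * fst f) * \<chi> (a * snd f)) c c' m = \<chi> (a * b') * cv sg c c' m"
proof (rule cv_scale)
  fix e f assume e: "e \<in> spt c" and f: "f \<in> spt c'"
  have "\<chi> ((snd e + a) * fst f) = \<chi> (snd e * fst f) * \<chi> (a * fst f)"
    using chi_lin_l[OF Ml_G[OF sc[OF e]] a] sc'[OF f] by simp
  moreover have "\<chi> (a * b') = \<chi> (a * fst f) * \<chi> (a * snd f)"
  proof -
    have h: "fst f \<in> Ml" "snd f \<in> Ml" "fst f + snd f = b'" using sc'[OF f] by auto
    have "\<chi> (a * b') = \<chi> (a * (fst f + snd f))" by (simp add: h(3))
    also have "\<dots> = \<chi> (a * fst f) * \<chi> (a * snd f)" by (rule chi_lin_r[OF a h(1) h(2)])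
    finally show ?thesis .
  qed
  ultimately show "\<chi> ((snd e + a) * fst f) * \<chi> (a * snd f) = \<chi> (a * b') * sg e f"
    by (simp add: sg_def mult_ac)
qed

lemma D0_fin: "b \<in> Ml \<Longrightarrow> finite (spt (D0 (b, a)))"
  unfolding D0_def by (simp add: io_fin phi_fin)

lemma io_scale: "io a (\<lambda>m. K * c m) M = K * io a c M" by (simp add: io_def)

lemma D0_mult:
  assumes b: "b \<in> Ml" and b': "b' \<in> Ml" and a: "a \<in> G"
  shows "cv tauT (D0 (b, a)) (D0 (b', a')) M = \<chi> (a * b') * D0 (b + b', a + a') M"
proof -
  let ?s = "\<lambda>e f. \<chi> ((snd e + a) * fst f) * \<chi> (a * snd f)"
  have eq: "cv ?s (phi b) (phi b') = (\<lambda>m. \<chi> (a * b') * cv sg (phi b) (phi b') m)"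
    by (rule ext, rule twist_simp[OF a]) (use phi_spt_Ml[OF b] phi_supp[OF b'] in \<open>auto simp: spt_def\<close>)
  have "cv tauT (D0 (b, a)) (D0 (b', a')) = io (a + a') (cv ?s (phi b) (phi b'))"
    unfolding D0_def by (simp add: io_Tmul phi_fin b b')
  also have "\<dots> = io (a + a') (\<lambda>m. \<chi> (a * b') * cv sg (phi b) (phi b') m)"
    by (simp only: eq)
  also have "\<dots> = io (a + a') (\<lambda>m. \<chi> (a * b') * phi (b + b') m)"
    using phi_mult[OF b b'] by simp
  finally have "cv tauT (D0 (b, a)) (D0 (b', a')) M = io (a + a') (\<lambda>m. \<chi> (a * b') * phi (b + b') m) M"
    by simp
  then show ?thesis unfolding D0_def by (simp add: io_scale)
qed

lemma Bcar_iff: "f \<in> Bcar G I p \<longleftrightarrow> finite (spt f) \<and> (\<forall>m\<in>spt f. fst m \<in> Ml \<and> snd m \<in> G)"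
  by (auto simp: Bcar_def spt_def Mset_eq)

definition Dfun :: "(rat \<times> rat \<Rightarrow> 'k) \<Rightarrow> (rat \<times> rat) \<times> (rat \<times> rat) \<Rightarrow> 'k" where
  "Dfun f = (if f \<in> Bcar G I p then (\<lambda>M. \<Sum>m\<in>spt f. f m * D0 m M) else (\<lambda>_. 0))"

lemma Dsum: "f \<in> Bcar G I p \<Longrightarrow> finite S \<Longrightarrow> spt f \<subseteq> S \<Longrightarrow> Dfun f M = (\<Sum>m\<in>S. f m * D0 m M)"
  unfolding Dfun_def by (auto intro!: sum.mono_neutral_left simp: spt_def)

lemma io_Bbas0: "io a (Bbas 0 0) = tens (Xel a) (Xel a)"
  by (auto simp: io_def tens_def Xel_def Bbas_def prod_eq_iff fun_eq_iff)

lemma Yel_pa: "Yel p i = Bbas (pa i) 0" by (simp add: Yel_def pa_def)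

lemma io_single: "i \<in> I \<Longrightarrow> io 0 (phl [i]) = addB (tens (Yel p i) (Xel 0)) (tens (Xel (pa i)) (Yel p i))"
  unfolding fun_eq_iff using pa_pos[of i]
  by (auto simp: io_def tens_def Xel_def Yel_pa Bbas_def addB_def prod_eq_iff chi0)

lemma Xel_Bcar: "a \<in> G \<Longrightarrow> Xel a \<in> Bcar G I p"
  unfolding Bcar_iff by (auto simp: spt_def Xel_def Bbas_def Ml_0)

lemma Bbas_Bcar: "b \<in> Ml \<Longrightarrow> a \<in> G \<Longrightarrow> Bbas b a \<in> Bcar G I p"
  unfolding Bcar_iff by (auto simp: spt_def Bbas_def)

lemma spt_Bbas: "spt (Bbas b a :: _ \<Rightarrow> 'k) = {(b, a)}" by (auto simp: spt_def Bbas_def)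

lemma D0_0: "D0 (0, a) = tens (Xel a) (Xel a)"
  unfolding D0_def by (simp add: phi_0 io_Bbas0)

lemma D0_pa: "i \<in> I \<Longrightarrow> D0 (pa i, 0) = addB (tens (Yel p i) (Xel 0)) (tens (Xel (pa i)) (Yel p i))"
proof -
  assume i: "i \<in> I"
  have "D0 (pa i, 0) = io 0 (phl [i])" unfolding D0_def fst_conv snd_conv phi_pa[OF i] ..
  then show ?thesis using io_single[OF i] by simp
qed

end

context BG begin

definition PD :: "((rat \<times> rat \<Rightarrow> 'k) \<Rightarrow> (rat \<times> rat) \<times> (rat \<times> rat) \<Rightarrow> 'k) \<Rightarrow> bool" where
  "PD D \<longleftrightarrow> (\<forall>f. f \<notin> Bcar G I p \<longrightarrow> D f = (\<lambda>_. 0)) \<and>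
      (\<forall>f\<in>Bcar G I p. \<forall>g\<in>Bcar G I p. D (addB f g) = addB (D f) (D g)) \<and>
      (\<forall>c. \<forall>f\<in>Bcar G I p. D (smulB c f) = smulB c (D f)) \<and>
      (\<forall>f\<in>Bcar G I p. \<forall>g\<in>Bcar G I p. D (Bmul \<chi> f g) = Tmul \<chi> (D f) (D g)) \<and>
      (\<forall>a\<in>G. D (Xel a) = tens (Xel a) (Xel a)) \<and>
      (\<forall>i\<in>I. D (Yel p i) = addB (tens (Yel p i) (Xel 0))
                                 (tens (Xel (1 / of_nat (p i))) (Yel p i)))"

lemma Delta_PD: "Delta G I p \<chi> = (THE D. PD D)"
  unfolding Delta_def PD_def ..

lemma Bcar_add: "f \<in> Bcar G I p \<Longrightarrow> g \<in> Bcar G I p \<Longrightarrow> addB f g \<in> Bcar G I p"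
proof -
  assume f: "f \<in> Bcar G I p" and g: "g \<in> Bcar G I p"
  have "spt (addB f g) \<subseteq> spt f \<union> spt g" by (auto simp: spt_def addB_def)
  then show ?thesis using f g unfolding Bcar_iff by (auto intro: finite_subset)
qed

lemma Bcar_smul: "f \<in> Bcar G I p \<Longrightarrow> smulB c f \<in> Bcar G I p"
proof -
  assume f: "f \<in> Bcar G I p"
  have "spt (smulB c f) \<subseteq> spt f" by (auto simp: spt_def smulB_def)
  then show ?thesis using f unfolding Bcar_iff by (auto intro: finite_subset)
qed

lemma Bcar_mul: "f \<in> Bcar G I p \<Longrightarrow> g \<in> Bcar G I p \<Longrightarrow> Bmul \<chi> f g \<in> Bcar G I p"
proof -
  assume f: "f \<in> Bcar G I p" and g: "g \<in> Bcar G I p"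
  have s: "spt (Bmul \<chi> f g) \<subseteq> (\<lambda>(u,v). u + v) ` (spt f \<times> spt g)" unfolding Bmul_cv by (rule cv_spt)
  have "finite ((\<lambda>(u,v). u + v) ` (spt f \<times> spt g))" using f g by (simp add: Bcar_iff)
  then have fin: "finite (spt (Bmul \<chi> f g))" using s finite_subset by blast
  have mem: "\<forall>m\<in>spt (Bmul \<chi> f g). fst m \<in> Ml \<and> snd m \<in> G"
  proof
    fix m assume "m \<in> spt (Bmul \<chi> f g)"
    then obtain u v where "u \<in> spt f" "v \<in> spt g" "m = u + v" using s by auto
    then show "fst m \<in> Ml \<and> snd m \<in> G" using f g by (auto simp: Bcar_iff intro: Ml_add Gadd)
  qed
  show ?thesis using fin mem unfolding Bcar_iff by blast
qed

lemma Dfun_add: "f \<in> Bcar G I p \<Longrightarrow> g \<in> Bcar G I p \<Longrightarrow> Dfun (addB f g) = addB (Dfun f) (Dfun g)"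
proof
  fix M
  assume f: "f \<in> Bcar G I p" and g: "g \<in> Bcar G I p"
  let ?S = "spt f \<union> spt g"
  have fS: "finite ?S" using f g by (simp add: Bcar_iff)
  have "Dfun (addB f g) M = (\<Sum>m\<in>?S. addB f g m * D0 m M)"
    by (rule Dsum[OF Bcar_add[OF f g] fS]) (auto simp: spt_def addB_def)
  also have "\<dots> = (\<Sum>m\<in>?S. f m * D0 m M) + (\<Sum>m\<in>?S. g m * D0 m M)"
    by (simp add: addB_def distrib_right sum.distrib)
  also have "\<dots> = Dfun f M + Dfun g M"
    using Dsum[OF f fS] Dsum[OF g fS] by simp
  finally show "Dfun (addB f g) M = addB (Dfun f) (Dfun g) M" by (simp add: addB_def)
qed

lemma Dfun_smul: "f \<in> Bcar G I p \<Longrightarrow> Dfun (smulB c f) = smulB c (Dfun f)"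
proof
  fix M
  assume f: "f \<in> Bcar G I p"
  have fS: "finite (spt f)" using f by (simp add: Bcar_iff)
  have "Dfun (smulB c f) M = (\<Sum>m\<in>spt f. smulB c f m * D0 m M)"
    by (rule Dsum[OF Bcar_smul[OF f] fS]) (auto simp: spt_def smulB_def)
  also have "\<dots> = c * Dfun f M" using Dsum[OF f fS order_refl]
    by (simp add: smulB_def sum_distrib_left mult.assoc)
  finally show "Dfun (smulB c f) M = smulB c (Dfun f) M" by (simp add: smulB_def)
qed

lemma tauT_eq: "tauT = (\<lambda>U V. \<chi> (snd (fst U) * fst (fst V)) * \<chi> (snd (snd U) * fst (snd V)))"
  by (simp add: tauT_def fun_eq_iff)

lemma Dfun_mul:
  assumes f: "f \<in> Bcar G I p" and g: "g \<in> Bcar G I p"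
  shows "Dfun (Bmul \<chi> f g) = Tmul \<chi> (Dfun f) (Dfun g)"
proof
  fix M
  let ?Sf = "spt f" and ?Sg = "spt g"
  let ?Z = "(\<lambda>(u,v). u + v) ` (?Sf \<times> ?Sg)"
  let ?tB = "\<lambda>u v. \<chi> (snd u * fst v)"
  have fSf: "finite ?Sf" and fSg: "finite ?Sg" using f g by (simp_all add: Bcar_iff)
  have fZ: "finite ?Z" using fSf fSg by simp
  have Mf: "\<And>u. u \<in> ?Sf \<Longrightarrow> fst u \<in> Ml \<and> snd u \<in> G" using f by (simp add: Bcar_iff)
  have Mg: "\<And>v. v \<in> ?Sg \<Longrightarrow> fst v \<in> Ml \<and> snd v \<in> G" using g by (simp add: Bcar_iff)
  have "Dfun (Bmul \<chi> f g) M = (\<Sum>m\<in>?Z. Bmul \<chi> f g m * D0 m M)"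
    by (rule Dsum[OF Bcar_mul[OF f g] fZ]) (unfold Bmul_cv, rule cv_spt)
  also have "\<dots> = (\<Sum>m\<in>?Z. (\<Sum>u\<in>?Sf. \<Sum>v\<in>?Sg. if u + v = m then f u * g v * ?tB u v else 0) * D0 m M)"
    unfolding Bmul_cv by (intro sum.cong refl, subst cv_sup[OF fSf fSg]) auto
  also have "\<dots> = (\<Sum>m\<in>?Z. \<Sum>u\<in>?Sf. \<Sum>v\<in>?Sg. if u + v = m then f u * g v * ?tB u v * D0 m M else 0)"
    by (intro sum.cong refl) (auto simp: sum_distrib_right intro!: sum.cong)
  also have "\<dots> = (\<Sum>u\<in>?Sf. \<Sum>m\<in>?Z. \<Sum>v\<in>?Sg. if u + v = m then f u * g v * ?tB u v * D0 m M else 0)"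
    by (rule sum.swap)
  also have "\<dots> = (\<Sum>u\<in>?Sf. \<Sum>v\<in>?Sg. \<Sum>m\<in>?Z. if u + v = m then f u * g v * ?tB u v * D0 m M else 0)"
    by (rule sum.cong[OF refl], rule sum.swap)
  also have "\<dots> = (\<Sum>u\<in>?Sf. \<Sum>v\<in>?Sg. f u * g v * ?tB u v * D0 (u + v) M)"
  proof (intro sum.cong refl)
    fix u v assume "u \<in> ?Sf" "v \<in> ?Sg"
    then have "u + v \<in> ?Z" by force
    then show "(\<Sum>m\<in>?Z. if u + v = m then f u * g v * ?tB u v * D0 m M else 0) = f u * g v * ?tB u v * D0 (u + v) M"
      using fZ by (simp add: sum.delta)
  qed
  also have "\<dots> = (\<Sum>u\<in>?Sf. \<Sum>v\<in>?Sg. cv tauT (\<lambda>x. f u * D0 u x) (\<lambda>y. g v * D0 v y) M)"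
  proof (intro sum.cong refl)
    fix u v assume u: "u \<in> ?Sf" and v: "v \<in> ?Sg"
    have uv: "u + v = (fst u + fst v, snd u + snd v)" by (simp add: prod_eq_iff)
    have "cv tauT (\<lambda>x. f u * D0 u x) (\<lambda>y. g v * D0 v y) M = f u * g v * cv tauT (D0 (fst u, snd u)) (D0 (fst v, snd v)) M"
      by (simp add: cv_smul)
    also have "\<dots> = f u * g v * (\<chi> (snd u * fst v) * D0 (fst u + fst v, snd u + snd v) M)"
      using D0_mult[of "fst u" "fst v" "snd u" "snd v" M] Mf[OF u] Mg[OF v] by simp
    also have "\<dots> = f u * g v * ?tB u v * D0 (u + v) M" by (simp only: uv[symmetric] mult.assoc)
    finally show "f u * g v * ?tB u v * D0 (u + v) M = cv tauT (\<lambda>x. f u * D0 u x) (\<lambda>y. g v * D0 v y) M"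
      by (rule sym)
  qed
  also have "\<dots> = cv tauT (\<lambda>x. \<Sum>u\<in>?Sf. f u * D0 u x) (\<lambda>y. \<Sum>v\<in>?Sg. g v * D0 v y) M"
  proof (rule cv_sum[symmetric, OF fSf fSg])
    fix u assume u: "u \<in> ?Sf"
    have "spt (\<lambda>x. f u * D0 u x) \<subseteq> spt (D0 (fst u, snd u))" by (auto simp: spt_def)
    then show "finite (spt (\<lambda>x. f u * D0 u x))" using D0_fin Mf[OF u] finite_subset by blast
  next
    fix v assume v: "v \<in> ?Sg"
    have "spt (\<lambda>x. g v * D0 v x) \<subseteq> spt (D0 (fst v, snd v))" by (auto simp: spt_def)
    then show "finite (spt (\<lambda>x. g v * D0 v x))" using D0_fin Mg[OF v] finite_subset by blast
  qed
  also have "\<dots> = Tmul \<chi> (Dfun f) (Dfun g) M"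
    using f g by (simp add: Tmul_cv tauT_eq[symmetric] Dfun_def)
  finally show "Dfun (Bmul \<chi> f g) M = Tmul \<chi> (Dfun f) (Dfun g) M" .
qed

lemma Dfun_X: "a \<in> G \<Longrightarrow> Dfun (Xel a) = tens (Xel a) (Xel a)"
proof
  fix M assume a: "a \<in> G"
  have "Dfun (Xel a) M = (\<Sum>m\<in>{(0, a)}. Xel a m * D0 m M)"
    by (rule Dsum[OF Xel_Bcar[OF a]]) (auto simp: Xel_def spt_Bbas)
  then show "Dfun (Xel a) M = tens (Xel a) (Xel a) M" by (simp add: Xel_def Bbas_def D0_0[unfolded Xel_def])
qed

lemma Dfun_Y: "i \<in> I \<Longrightarrow> Dfun (Yel p i) = addB (tens (Yel p i) (Xel 0)) (tens (Xel (1 / of_nat (p i))) (Yel p i))"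
proof
  fix M assume i: "i \<in> I"
  have "Dfun (Yel p i) M = (\<Sum>m\<in>{(pa i, 0)}. Yel p i m * D0 m M)"
    by (rule Dsum) (auto simp: Yel_pa spt_Bbas intro: Bbas_Bcar Ml_pa[OF i] G0)
  also have "\<dots> = D0 (pa i, 0) M" by (simp add: Yel_pa Bbas_def)
  finally show "Dfun (Yel p i) M = addB (tens (Yel p i) (Xel 0)) (tens (Xel (1 / of_nat (p i))) (Yel p i)) M"
    using D0_pa[OF i] by (simp add: pa_def)
qed

lemma PD_Dfun: "PD Dfun"
  unfolding PD_def
  using Dfun_add Dfun_smul Dfun_mul Dfun_X Dfun_Y by (auto simp: Dfun_def)

lemma Bmul_bas: "Bmul \<chi> (Bbas b 0) (Bbas b' a') = Bbas (b + b') a'"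
proof
  fix m
  show "Bmul \<chi> (Bbas b 0) (Bbas b' a') m = Bbas (b + b') a' m"
    unfolding Bmul_cv using cv_delta[of "\<lambda>u v. \<chi> (snd u * fst v)" "(b,0)" "(b',a')" m] by (simp add: Bbas_def chi0)
qed

lemma uniq:
  assumes P: "PD D'"
  shows "D' = Dfun"
proof -
  have c1: "\<And>f. f \<notin> Bcar G I p \<Longrightarrow> D' f = (\<lambda>_. 0)"
   and c2: "\<And>f g. f \<in> Bcar G I p \<Longrightarrow> g \<in> Bcar G I p \<Longrightarrow> D' (addB f g) = addB (D' f) (D' g)"
   and c3: "\<And>c f. f \<in> Bcar G I p \<Longrightarrow> D' (smulB c f) = smulB c (D' f)"
   and c4: "\<And>f g. f \<in> Bcar G I p \<Longrightarrow> g \<in> Bcar G I p \<Longrightarrow> D' (Bmul \<chi> f g) = Tmul \<chi> (D' f) (D' g)"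
   and c5: "\<And>a. a \<in> G \<Longrightarrow> D' (Xel a) = tens (Xel a) (Xel a)"
   and c6: "\<And>i. i \<in> I \<Longrightarrow> D' (Yel p i) = addB (tens (Yel p i) (Xel 0)) (tens (Xel (1 / of_nat (p i))) (Yel p i))"
    using P unfolding PD_def by blast+
  have Tm: "Tmul \<chi> = cv tauT" by (simp add: Tmul_cv tauT_eq)
  have tw0: "(\<lambda>e f. \<chi> ((snd e + 0) * fst f) * \<chi> (0 * snd f)) = sg"
    by (simp add: sg_def chi0 fun_eq_iff)
  have Dl: "D' (Bbas (ls l) 0) = io 0 (phl l)" if l: "set l \<subseteq> I" for l
    using l
  proof (induction l)
    case Nil
    have "D' (Bbas (ls []) 0) = tens (Xel 0) (Xel 0)" using c5[OF G0] by (simp add: Xel_def)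
    then show ?case by (simp add: io_Bbas0)
  next
    case (Cons i l)
    have i: "i \<in> I" and l: "set l \<subseteq> I" using Cons.prems by auto
    have e: "Bbas (ls (i # l)) 0 = Bmul \<chi> (Bbas (ls l) 0) (Yel p i)"
      by (simp add: Yel_pa Bmul_bas add.commute)
    have "D' (Bbas (ls (i # l)) 0) = Tmul \<chi> (D' (Bbas (ls l) 0)) (D' (Yel p i))"
      unfolding e by (rule c4) (auto intro: Bbas_Bcar Ml_ls[OF l] G0 simp: Yel_pa Ml_pa[OF i])
    also have "\<dots> = cv tauT (io 0 (phl l)) (io 0 (phl [i]))"
      using Cons.IH[OF l] c6[OF i] io_single[OF i] by (simp add: Tm pa_def)
    also have "\<dots> = io 0 (cv sg (phl l) (phl [i]))"
      using io_Tmul[OF phl_fin phl_fin, of 0 l 0 "[i]"] tw0 by simp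
    also have "\<dots> = io 0 (phl (i # l))"
      using phl_append[OF l, of "[i]"] i phl_perm[of "l @ [i]" "i # l"] l by simp
    finally show ?case .
  qed
  have Db: "D' (Bbas b a) = D0 (b, a)" if b: "b \<in> Ml" and a: "a \<in> G" for b a
  proof -
    obtain l where l: "set l \<subseteq> I" "b = ls l" using b by (auto simp: Ml_def)
    have e: "Bbas b a = Bmul \<chi> (Bbas b 0) (Xel a)" by (simp add: Xel_def Bmul_bas)
    have "D' (Bbas b a) = Tmul \<chi> (D' (Bbas b 0)) (D' (Xel a))"
      unfolding e by (rule c4) (auto intro: Bbas_Bcar b G0 Xel_Bcar a)
    also have "\<dots> = cv tauT (io 0 (phi b)) (io a (Bbas 0 0))"
      using Dl[OF l(1)] c5[OF a] phi_ls[OF l(1)] l(2) by (simp add: Tm io_Bbas0)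
    also have "\<dots> = io a (cv sg (phi b) (Bbas 0 0))"
      using io_Tmul[OF phi_fin[OF b], of "Bbas 0 0" 0 a] tw0 by (simp add: spt_Bbas)
    also have "cv sg (phi b) (Bbas 0 0) = phi b"
    proof
      fix m
      have "cv sg (phi b) (Bbas 0 0) m = (\<Sum>y\<in>{(0,0)}. phi b (m - y) * Bbas 0 0 y * sg (m - y) y)"
        by (rule cv_right[OF _ _ phi_fin[OF b]]) (auto simp: spt_Bbas)
      then show "cv sg (phi b) (Bbas 0 0) m = phi b m" by (cases m) (simp add: Bbas_def sg_def chi0)
    qed
    finally show ?thesis by (simp add: D0_def)
  qed
  have comb: "(\<lambda>M. \<Sum>m\<in>S. c m * Bbas (fst m) (snd m) M) \<in> Bcar G I p \<and>
      D' (\<lambda>M. \<Sum>m\<in>S. c m * Bbas (fst m) (snd m) M) = (\<lambda>M. \<Sum>m\<in>S. c m * D0 m M)"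
    if "finite S" "\<forall>m\<in>S. fst m \<in> Ml \<and> snd m \<in> G" for S c
    using that
  proof (induction S rule: finite_induct)
    case empty
    have z: "(\<lambda>M. \<Sum>m\<in>{}. c m * Bbas (fst m) (snd m) M) = smulB 0 (Xel 0)" by (simp add: smulB_def fun_eq_iff)
    show ?case unfolding z using c3[OF Xel_Bcar[OF G0], of 0] Bcar_smul[OF Xel_Bcar[OF G0]] by (simp add: smulB_def Bcar_iff spt_def)
  next
    case (insert x F)
    have x: "fst x \<in> Ml" "snd x \<in> G" using insert.prems by auto
    have IH: "(\<lambda>M. \<Sum>m\<in>F. c m * Bbas (fst m) (snd m) M) \<in> Bcar G I p"
      "D' (\<lambda>M. \<Sum>m\<in>F. c m * Bbas (fst m) (snd m) M) = (\<lambda>M. \<Sum>m\<in>F. c m * D0 m M)"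
      using insert.IH insert.prems by auto
    have e: "(\<lambda>M. \<Sum>m\<in>insert x F. c m * Bbas (fst m) (snd m) M) =
        addB (smulB (c x) (Bbas (fst x) (snd x))) (\<lambda>M. \<Sum>m\<in>F. c m * Bbas (fst m) (snd m) M)"
      using insert.hyps by (simp add: addB_def smulB_def fun_eq_iff)
    have bx: "Bbas (fst x) (snd x) \<in> Bcar G I p" by (rule Bbas_Bcar[OF x])
    show ?case unfolding e
      using c2[OF Bcar_smul[OF bx] IH(1)] c3[OF bx] Db[OF x] IH insert.hyps Bcar_add[OF Bcar_smul[OF bx] IH(1)]
      by (simp add: addB_def smulB_def fun_eq_iff)
  qed
  show ?thesis
  proof
    fix f
    show "D' f = Dfun f"
    proof (cases "f \<in> Bcar G I p")
      case False then show ?thesis using c1 by (simp add: Dfun_def)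
    next
      case True
      have fin: "finite (spt f)" and sub: "\<forall>m\<in>spt f. fst m \<in> Ml \<and> snd m \<in> G" using True by (auto simp: Bcar_iff)
      have fe: "f = (\<lambda>M. \<Sum>m\<in>spt f. f m * Bbas (fst m) (snd m) M)"
      proof
        fix M
        have "(\<Sum>m\<in>spt f. f m * Bbas (fst m) (snd m) M) = (\<Sum>m\<in>spt f. if m = M then f m else 0)"
          by (intro sum.cong refl) (auto simp: Bbas_def)
        also have "\<dots> = f M" using fin by (simp add: sum.delta' spt_def)
        finally show "f M = (\<Sum>m\<in>spt f. f m * Bbas (fst m) (snd m) M)" by simp
      qed
      have "D' f = (\<lambda>M. \<Sum>m\<in>spt f. f m * D0 m M)" using comb[OF fin sub, of f] fe by metis
      then show ?thesis using True by (simp add: Dfun_def)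
    qed
  qed
qed

lemma Delta_eq: "Delta G I p \<chi> = Dfun"
  unfolding Delta_PD by (rule the_equality, rule PD_Dfun, erule uniq)

end

context BG begin

lemma sum_one: "finite S \<Longrightarrow> (\<And>m. m \<in> S \<Longrightarrow> m \<noteq> m0 \<Longrightarrow> h m = 0) \<Longrightarrow> (\<Sum>m\<in>S. h m) = (if m0 \<in> S then h m0 else 0)"
proof -
  assume fS: "finite S" and z: "\<And>m. m \<in> S \<Longrightarrow> m \<noteq> m0 \<Longrightarrow> h m = 0"
  have "(\<Sum>m\<in>S. h m) = (\<Sum>m\<in>S. if m = m0 then h m else 0)" by (rule sum.cong) (auto simp: z)
  also have "\<dots> = (if m0 \<in> S then h m0 else 0)" using fS by (simp add: sum.delta')
  finally show ?thesis .
qed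

lemma Delta_gen:
  assumes z: "z \<in> Bcar G I p"
  shows "Delta G I p \<chi> z M = (if snd (fst M) = fst (snd M) + snd (snd M)
      then z (fst (fst M) + fst (snd M), snd (snd M)) * phi (fst (fst M) + fst (snd M)) (fst (fst M), fst (snd M)) else 0)"
proof -
  let ?m0 = "(fst (fst M) + fst (snd M), snd (snd M))"
  have fin: "finite (spt z)" and Mz: "\<And>m. m \<in> spt z \<Longrightarrow> fst m \<in> Ml \<and> snd m \<in> G" using z by (auto simp: Bcar_iff)
  have "Delta G I p \<chi> z M = (\<Sum>m\<in>spt z. z m * D0 m M)" using z by (simp add: Delta_eq Dfun_def)
  also have "\<dots> = (if ?m0 \<in> spt z then z ?m0 * D0 ?m0 M else 0)"
  proof (rule sum_one[OF fin])
    fix m assume m: "m \<in> spt z" "m \<noteq> ?m0"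
    show "z m * D0 m M = 0"
    proof (cases "snd (snd M) = snd m \<and> snd (fst M) = fst (snd M) + snd m")
      case True
      have "phi (fst m) (fst (fst M), fst (snd M)) = 0"
      proof (rule ccontr)
        assume ne: "phi (fst m) (fst (fst M), fst (snd M)) \<noteq> 0"
        have fm: "fst m \<in> Ml" using Mz[OF m(1)] by simp
        have "fst (fst M) + fst (snd M) = fst m" using phi_supp[OF fm ne] by simp
        moreover have "snd m = snd (snd M)" using True by simp
        ultimately have "m = ?m0" by (simp add: prod_eq_iff)
        then show False using m(2) by simp
      qed
      then show ?thesis by (simp add: D0_def io_def)
    next
      case False
      have "D0 m M = 0" unfolding D0_def io_def by (rule if_not_P[OF False])
      then show ?thesis by simp
    qed
  qed
  also have "\<dots> = z ?m0 * D0 ?m0 M" by (auto simp: spt_def)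
  also have "\<dots> = (if snd (fst M) = fst (snd M) + snd (snd M)
      then z ?m0 * phi (fst (fst M) + fst (snd M)) (fst (fst M), fst (snd M)) else 0)"
    by (simp add: D0_def io_def)
  finally show ?thesis .
qed

lemma nz_Ml: "z \<in> Bcar G I p \<Longrightarrow> z (b, a) \<noteq> 0 \<Longrightarrow> b \<in> Ml \<and> a \<in> G"
  by (auto simp: Bcar_iff spt_def)

lemma main1: "{g. grouplike G I p \<chi> g} = Xel ` G"
proof
  show "Xel ` G \<subseteq> {g. grouplike G I p \<chi> g}"
  proof
    fix g :: "rat \<times> rat \<Rightarrow> 'k" assume "g \<in> Xel ` G"
    then obtain a where a: "a \<in> G" "g = Xel a" by blast
    have "Xel a \<noteq> (\<lambda>_. (0::'k))" by (auto simp: Xel_def Bbas_def fun_eq_iff)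
    then show "g \<in> {g. grouplike G I p \<chi> g}"
      using a Xel_Bcar[OF a(1)] Dfun_X[OF a(1)] by (simp add: grouplike_def Delta_eq)
  qed
next
  show "{g. grouplike G I p \<chi> g} \<subseteq> Xel ` G"
  proof
    fix g :: "rat \<times> rat \<Rightarrow> 'k" assume "g \<in> {g. grouplike G I p \<chi> g}"
    then have gB: "g \<in> Bcar G I p" and g0: "g \<noteq> (\<lambda>_. 0)" and gD: "Delta G I p \<chi> g = tens g g"
      by (auto simp: grouplike_def)
    obtain b0 a0 where m0: "g (b0, a0) \<noteq> 0" using g0 by (metis surj_pair)
    have A: "g (0, a') = (if a' = a then 1 else 0)" if ba: "g (b, a) \<noteq> 0" for b a a'
    proof -
      have bM: "b \<in> Ml" using nz_Ml[OF gB ba] by simp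
      have "Delta G I p \<chi> g ((b, a), (0, a')) = (if a = a' then g (b, a) else 0)"
        using Delta_gen[OF gB, of "((b, a), (0, a'))"] phi_top[OF bM] by auto
      moreover have "Delta G I p \<chi> g ((b, a), (0, a')) = g (b, a) * g (0, a')"
        using gD by (simp add: tens_def)
      ultimately show ?thesis using ba by (cases "a = a'") auto
    qed
    have sameA: "a = a0" if "g (b, a) \<noteq> 0" for b a
      using A[OF that, of a0] A[OF m0, of a0] by (auto split: if_splits)
    have B: "b = 0" if ba: "g (b, a) \<noteq> 0" for b a
    proof (rule ccontr)
      assume b0: "b \<noteq> 0"
      have bM: "b \<in> Ml" using nz_Ml[OF gB ba] by simp
      have "Delta G I p \<chi> g ((0, b + a), (b, a)) = g (b, a)"
        using Delta_gen[OF gB, of "((0, b + a), (b, a))"] phi_bot[OF bM] by simp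
      moreover have "Delta G I p \<chi> g ((0, b + a), (b, a)) = g (0, b + a) * g (b, a)"
        using gD by (simp add: tens_def)
      moreover have "g (0, b + a) = 0" using A[OF ba, of "b + a"] b0 by simp
      ultimately show False using ba by simp
    qed
    have "g = Xel a0"
    proof
      fix m :: "rat \<times> rat"
      obtain b a where m: "m = (b, a)" by (cases m)
      show "g m = Xel a0 m"
      proof (cases "g m = 0")
        case True
        have "(b, a) \<noteq> (0, a0)" using True m A[OF m0, of a0] by auto
        then show ?thesis using True m by (auto simp: Xel_def Bbas_def)
      next
        case False
        then have "b = 0" "a = a0" using B sameA m by auto
        then show ?thesis using A[OF m0, of a0] m by (simp add: Xel_def Bbas_def)
      qed
    qed
    moreover have "a0 \<in> G" using nz_Ml[OF gB m0] by simp
    ultimately show "g \<in> Xel ` G" by blast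
  qed
qed

lemma skew_struct:
  assumes z: "z \<in> Bcar G I p" and D: "Delta G I p \<chi> z = addB (tens z (Xel 0)) (tens (Xel a) z)"
    and nz: "z (b, a') \<noteq> 0"
  shows "a' = 0 \<or> (b = 0 \<and> a' = a)"
proof (rule ccontr)
  assume ne: "\<not> (a' = 0 \<or> (b = 0 \<and> a' = a))"
  have bM: "b \<in> Ml" using nz_Ml[OF z nz] by simp
  have "Delta G I p \<chi> z ((b, a'), (0, a')) = z (b, a')"
    using Delta_gen[OF z, of "((b, a'), (0, a'))"] phi_top[OF bM] by simp
  moreover have "Delta G I p \<chi> z ((b, a'), (0, a')) = 0"
    using D ne by (auto simp: addB_def tens_def Xel_def Bbas_def)
  ultimately show False using nz by simp
qed

lemma main2:
  assumes a: "a \<in> G" and sp: "skew_prim G I p \<chi> (Xel a) z"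
  shows "\<exists>c. \<exists>w\<in>kM G I p. z = addB (smulB c (addB (Xel 0) (smulB (-1) (Xel a)))) w"
proof -
  have z: "z \<in> Bcar G I p" and D: "Delta G I p \<chi> z = addB (tens z (Xel 0)) (tens (Xel a) z)"
    using sp by (auto simp: skew_prim_def)
  define c where "c = (if a = 0 then 0 else - z (0, a))"
  define w where "w m = z m - c * (Xel 0 m - Xel a m)" for m
  have eq: "z = addB (smulB c (addB (Xel 0) (smulB (-1) (Xel a)))) w"
    by (simp add: w_def addB_def smulB_def fun_eq_iff algebra_simps)
  have sw: "spt w \<subseteq> spt z \<union> {(0, 0), (0, a)}"
    by (auto simp: spt_def w_def Xel_def Bbas_def split: if_splits)
  have wB: "w \<in> Bcar G I p"
  proof -
    have "finite (spt w)" using sw z by (auto simp: Bcar_iff intro: finite_subset)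
    moreover have "\<forall>m\<in>spt w. fst m \<in> Ml \<and> snd m \<in> G"
      using sw z a G0 Ml_0 by (fastforce simp: Bcar_iff)
    ultimately show ?thesis by (simp add: Bcar_iff)
  qed
  have wM: "\<forall>m. w m \<noteq> 0 \<longrightarrow> snd m = 0"
  proof (intro allI impI)
    fix m assume wm: "w m \<noteq> 0"
    obtain b a' where m: "m = (b, a')" by (cases m)
    show "snd m = 0"
    proof (rule ccontr)
      assume a'0: "snd m \<noteq> 0"
      then have a'0': "a' \<noteq> 0" using m by simp
      show False
      proof (cases "m = (0, a)")
        case True
        then have "a \<noteq> 0" using a'0 by simp
        then have "w m = 0" using True by (simp add: w_def c_def Xel_def Bbas_def)
        then show False using wm by simp
      next
        case False
        have "z m = 0"
        proof (rule ccontr)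
          assume "z m \<noteq> 0"
          then have "a' = 0 \<or> (b = 0 \<and> a' = a)" using skew_struct[OF z D] m by simp
          then show False using a'0' False m by auto
        qed
        moreover have "Xel 0 m = 0" "Xel a m = 0" using a'0' False m by (auto simp: Xel_def Bbas_def)
        ultimately have "w m = 0" unfolding w_def by (metis diff_self mult_zero_right diff_zero)
        with wm show False by simp
      qed
    qed
  qed
  have "w \<in> kM G I p" using wB wM by (simp add: kM_def)
  then show ?thesis using eq by blast
qed

lemma main3:
  assumes sp: "skew_prim G I p \<chi> g z" and nkG: "z \<notin> kG G I p"
  shows "(\<exists>i\<in>I. \<exists>b c. z = addB (smulB b (Yel p i))
                          (smulB c (addB (Xel 0) (smulB (-1) (Xel (1 / of_nat (p i)))))))
         \<or> (\<exists>b c. z = addB (smulB b (Bbas 1 0))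
                          (smulB c (addB (Xel 0) (smulB (-1) (Xel 1)))))"
proof -
  have z: "z \<in> Bcar G I p" and gl: "grouplike G I p \<chi> g" and D0': "Delta G I p \<chi> z = addB (tens z (Xel 0)) (tens g z)"
    using sp by (auto simp: skew_prim_def)
  obtain a where a: "a \<in> G" "g = Xel a" using main1 gl by blast
  have D: "Delta G I p \<chi> z = addB (tens z (Xel 0)) (tens (Xel a) z)" using D0' a by simp
  note st = skew_struct[OF z D]
  obtain m where m: "z m \<noteq> 0" "fst m \<noteq> 0" using nkG z by (auto simp: kG_def)
  obtain b a' where bm: "m = (b, a')" by (cases m)
  have b0: "b \<noteq> 0" and zb: "z (b, 0) \<noteq> 0" using m bm st[of b a'] by auto
  have onlya: "b' = a" if "b' \<noteq> 0" "z (b', 0) \<noteq> 0" for b'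
  proof -
    have bM: "b' \<in> Ml" using nz_Ml[OF z that(2)] by simp
    have "Delta G I p \<chi> z ((0, b'), (b', 0)) = z (b', 0)"
      using Delta_gen[OF z, of "((0, b'), (b', 0))"] phi_bot[OF bM] by simp
    moreover have "Delta G I p \<chi> z ((0, b'), (b', 0)) = (if b' = a then z (b', 0) else 0)"
      using D that(1) by (auto simp: addB_def tens_def Xel_def Bbas_def)
    ultimately show ?thesis using that(2) by (auto split: if_splits)
  qed
  have ba: "b = a" using onlya[OF b0 zb] .
  have a0: "a \<noteq> 0" using b0 ba by simp
  have aM: "a \<in> Ml" using nz_Ml[OF z zb] ba by simp
  have c00: "z (0, 0) = - z (0, a)"
  proof -
    have "Delta G I p \<chi> z ((0, a), (0, 0)) = 0"
      using Delta_gen[OF z, of "((0, a), (0, 0))"] a0 by simp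
    moreover have "Delta G I p \<chi> z ((0, a), (0, 0)) = z (0, a) + z (0, 0)"
      using D by (simp add: addB_def tens_def Xel_def Bbas_def)
    ultimately show ?thesis by (simp add: eq_neg_iff_add_eq_0 add.commute)
  qed
  have atom: "a = 1 \<or> (\<exists>i\<in>I. a = pa i)"
  proof (rule ccontr)
    assume "\<not> (a = 1 \<or> (\<exists>i\<in>I. a = pa i))"
    then obtain e1 e2 where e: "e1 \<noteq> 0" "e2 \<noteq> 0" "phi a (e1, e2) \<noteq> 0"
      using middle[OF aM a0] by blast
    have s: "e1 + e2 = a" using phi_supp[OF aM e(3)] by simp
    have "Delta G I p \<chi> z ((e1, e2), (e2, 0)) = z (a, 0) * phi a (e1, e2)"
      using Delta_gen[OF z, of "((e1, e2), (e2, 0))"] s by simp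
    moreover have "Delta G I p \<chi> z ((e1, e2), (e2, 0)) = 0"
      using D e(1,2) by (simp add: addB_def tens_def Xel_def Bbas_def)
    ultimately show False using e(3) zb ba by simp
  qed
  define \<beta> where "\<beta> = z (a, 0)"
  define c where "c = z (0, 0)"
  have form: "z = addB (smulB \<beta> (Bbas a 0)) (smulB c (addB (Xel 0) (smulB (-1) (Xel a))))"
  proof
    fix m :: "rat \<times> rat"
    obtain b' a'' where m: "m = (b', a'')" by (cases m)
    show "z m = addB (smulB \<beta> (Bbas a 0)) (smulB c (addB (Xel 0) (smulB (-1) (Xel a)))) m"
    proof (cases "m = (a, 0) \<or> m = (0, 0) \<or> m = (0, a)")
      case True
      then show ?thesis using a0 c00 by (auto simp: \<beta>_def c_def addB_def smulB_def Xel_def Bbas_def)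
    next
      case False
      have "z m = 0"
      proof (rule ccontr)
        assume nz: "z m \<noteq> 0"
        then have "a'' = 0 \<or> (b' = 0 \<and> a'' = a)" using st m by simp
        then show False
        proof
          assume "a'' = 0"
          then have "b' \<noteq> 0" using False m by auto
          then have "b' = a" using onlya nz m \<open>a'' = 0\<close> by simp
          then show False using False m \<open>a'' = 0\<close> by simp
        next
          assume "b' = 0 \<and> a'' = a"
          then show False using False m by simp
        qed
      qed
      then show ?thesis using False by (auto simp: addB_def smulB_def Xel_def Bbas_def)
    qed
  qed
  from atom show ?thesis
  proof
    assume "a = 1"
    then have "z = addB (smulB \<beta> (Bbas 1 0)) (smulB c (addB (Xel 0) (smulB (-1) (Xel 1))))" using form by simp
    then show ?thesis by blast
  next
    assume "\<exists>i\<in>I. a = pa i"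
    then obtain i where i: "i \<in> I" "a = pa i" by blast
    then have "z = addB (smulB \<beta> (Yel p i)) (smulB c (addB (Xel 0) (smulB (-1) (Xel (1 / of_nat (p i))))))"
      using form by (simp add: Yel_pa pa_def)
    then show ?thesis using i by blast
  qed
qed

end

theorem lemma2p4:
  fixes G :: "rat set" and I :: "'i set" and p :: "'i \<Rightarrow> nat" and \<chi> :: "rat \<Rightarrow> 'k::{alg_closed_field, field_char_0}"
  assumes G_grp: "\<forall>a\<in>G. \<forall>b\<in>G. a + b \<in> G" "\<forall>a\<in>G. - a \<in> G"
    and G_Z: "(\<int> :: rat set) \<subseteq> G"
    and I2: "\<exists>i\<in>I. \<exists>j\<in>I. i \<noteq> j"
    and p2: "\<forall>i\<in>I. p i \<ge> 2"
    and pcop: "\<forall>i\<in>I. \<forall>j\<in>I. i \<noteq> j \<longrightarrow> coprime (p i) (p j)"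
    and pG: "\<forall>i\<in>I. 1 / of_nat (p i) \<in> G"
    and chi_hom: "\<forall>u\<in>GMset G I p. \<forall>v\<in>GMset G I p. \<chi> (u + v) = \<chi> u * \<chi> v"
    and chi_unit: "\<forall>u\<in>GMset G I p. \<chi> u \<noteq> 0"
    and chi_prim: "\<forall>i\<in>I. \<chi> (1 / of_nat (p i) ^ 2) ^ p i = 1 \<and>
                      (\<forall>n. 0 < n \<and> n < p i \<longrightarrow> \<chi> (1 / of_nat (p i) ^ 2) ^ n \<noteq> 1)"
  shows "{g. grouplike G I p \<chi> g} = Xel ` G \<and>
       (\<forall>a\<in>G. \<forall>z. skew_prim G I p \<chi> (Xel a) z \<longrightarrow>
           (\<exists>c. \<exists>w\<in>kM G I p. z = addB (smulB c (addB (Xel 0) (smulB (-1) (Xel a)))) w)) \<and>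
       (\<forall>g z. skew_prim G I p \<chi> g z \<and> z \<notin> kG G I p \<longrightarrow>
           (\<exists>i\<in>I. \<exists>b c. z = addB (smulB b (Yel p i))
                          (smulB c (addB (Xel 0) (smulB (-1) (Xel (1 / of_nat (p i)))))))
         \<or> (\<exists>b c. z = addB (smulB b (Bbas 1 0))
                          (smulB c (addB (Xel 0) (smulB (-1) (Xel 1))))))"
proof -
  interpret B: BG G I p \<chi>
    by (unfold_locales) (use assms in auto)
  show ?thesis using B.main1 B.main2 B.main3 by blast
qed


end
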